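(* Let $\alpha=(\alpha_\pi)_{\pi\in\mathcal P}$ be admissible weights, $(\mathcal A,\Phi)$ an algebraic probability space, and $\mathbf a=(a^{\mathsf Q}_\ell:\mathsf Q\in\mathcal F,\ell\in I^{\mathsf Q})\subset\mathcal A$ a family with $[n]$ the disjoint union of the index sets $I^{\mathsf Q}$. Put $\mathbf f(\ell)=\mathsf Q$ if $\ell\in I^{\mathsf Q}$, and suppose $\mathbf f(i)=\mathbf f(i+1)=\mathsf q$ for some $i\in[n-1]$. Define $\tilde{\mathbf a}$ by the index sets $\tilde I^{\mathsf q}=(I^{\mathsf q}\setminus\{i,i+1\})\cup\{\{i,i+1\}\}$, $\tilde I^{\mathsf Q}=I^{\mathsf Q}$ for $\mathsf Q\ne\mathsf q$, with $a^{\mathsf q}_{\{i,i+1\}}:=a^{\mathsf q}_ia^{\mathsf q}_{i+1}$ and all other elements unchanged. Let $X=x^{\mathbf f(1)}_1\cdots x^{\mathbf f(n)}_n$ and $\tilde X=x^{\mathbf f(1)}_1\cdots x^{\mathbf f(i-1)}_{i-1}x^{\mathsf q}_{\{i,i+1\}}x^{\mathbf f(i+2)}_{i+2}\cdots x^{\mathbf f(n)}_n$. Then $m_{\tilde{\mathbf a}}(\tilde X)=m_{\mathbf a}(X)$ and $$c_{\tilde{\mathbf a}}(\tilde X)=c_{\mathbf a}(X)+\sum_{\substack{\sigma=\{\beta_1,\beta_2\}\in\mathcal P(\mathbf f)\\ i\in\beta_1\ne\beta_2\ni i+1}}\alpha_\sigma\, c_{\mathbf a}(X|_{\beta_1})\,c_{\mathbf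 a}(X|_{\beta_2}).$$
   Context: Fix a finite set $\mathcal F$ of faces. For $\mathbf f\in\mathcal F^n$ ($n\ge1$), $[n]_{\mathbf f}$ is $\{1,\dots,n\}$ with faces $\ell\mapsto\mathbf f(\ell)$; $\mathcal P(\mathbf f)$ is the set of set partitions of $[n]$ with these faces, $\mathcal P=\bigcup_{\mathbf f}\mathcal P(\mathbf f)$; a finite totally ordered set $S$ with face map (e.g. a subset of $[n]$, or the quotient of $[n]$ identifying $i,i+1$) is identified with $[m]_{|S|}$ via the order-preserving bijection, so its partitions are in $\mathcal P$. $1_{\mathbf f}$: one-block partition; $\pi_{\beta_1\smile\beta_2}=(\pi\setminus\{\beta_1,\beta_2\})\cup\{\beta_1\cup\beta_2\}$; $\{\beta_1,\beta_2\}$ is a partition of the multi-faced set $\beta_1\cup\beta_2$. Reduction $\pi_{\mathrm{red}}$: quotient by $s\sim t$ ($s\le t$) iff all $r\in[s,t]$ have the same face and lie in the same block. Mirror: $\overline{\mathbf f}(j)=\mathbf f(n+1-j)$, $\overline\pi=\{\{n+1-j:j\in\beta\}:\beta\in\pi\}$. Admissible weights: $\alpha=(\alpha_\pi)\subset\mathbb C$ with (i) $\alpha_{1_{\mathbf f}}=1$; (ii) $\alpha_{\{\{1\},\{2\}\}}=1$ for $\mathbf f\in\mathcal F^2$; (iii) $\alpha_\pi=\alpha_{\pi_{\mathrm{red}}}$; (iv) if $\pi\in\mathcal P(\mathbf f)$ has blocks $\beta_1\ne\beta_2$, $j\in\beta_1$, $j+1\in\beta_2$, $\mathbf f(j)=\mathbf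 f(j+1)$, then $\alpha_\pi=\alpha_{\pi_{\beta_1\smile\beta_2}}\alpha_{\{\beta_1,\beta_2\}}$; (v) $\alpha_\pi=\alpha_\sigma$ if $\pi\in\mathcal P(\mathbf f)$, $\sigma\in\mathcal P(\mathbf g)$ have the same set partition and $\mathbf f(\ell)=\mathbf g(\ell)$ for $1<\ell<n$; (vi) $\alpha_{\overline\pi}=\overline{\alpha_\pi}$. An algebraic probability space is a pair $(\mathcal A,\Phi)$ of a complex algebra and a linear functional. For a family $\mathbf a=(a^{\mathsf Q}_\ell:\mathsf Q\in\mathcal F,\ell\in I^{\mathsf Q})\subset\mathcal A$ let $j_{\mathbf a}$ be the homomorphism from the non-unital noncommutative polynomial algebra $\mathbb C\langle x^{\mathsf Q}_\ell\rangle$ to $\mathcal A$ with $x^{\mathsf Q}_\ell\mapsto a^{\mathsf Q}_\ell$; moments are $m_{\mathbf a}(Y)=\Phi(j_{\mathbf a}(Y))$. For a monomial $Y=x^{\mathbf g(1)}_{\ell_1}\cdots x^{\mathbf g(m)}_{\ell_m}$ and $\beta=\{r_1<\dots<r_p\}\subset[m]$, $Y|_\beta=x^{\mathbf g(r_1)}_{\ell_{r_1}}\cdots x^{\mathbf g(r_p)}_{\ell_{r_p}}$. The $\alpha$-cumulants $c_{\mathbf a}$ are the unique values on monomials with $m_{\mathbf a}(Y)=\sum_{\pi\in\mathcal P(\mathbf g)}\alpha_\pi\prod_{\beta\in\pi}c_{\mathbf a}(Y|_\beta)$ for all monomials $Y$ (here $\mathbf g$ is the face word of $Y$). *)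

theory Defs
  imports Complex_Main "HOL-Library.Disjoint_Sets"
begin

text \<open>A face word f in F^n is a list of length n over the (finite) face
type 'q. Positions are 0-based: a partition in P(f) is a set partition of {0..<length f},
so position p corresponds to the element p+1 of [n] in the paper.\<close>

definition Pf :: "'q list \<Rightarrow> nat set set set" where
  "Pf f = {\<pi>. partition_on {0..<length f} \<pi>}"

definition rank :: "nat set \<Rightarrow> nat \<Rightarrow> nat" where
  "rank S x = card {y \<in> S. y < x}"

text \<open>A partition of a subset S is identified with a partition of {0..<card S}.\<close>
definition relabel :: "nat set \<Rightarrow> nat set set \<Rightarrow> nat set set" where
  "relabel S \<pi> = (\<lambda>\<beta>. rank S ` \<beta>) ` \<pi>"

definition merge_blocks :: "nat set set \<Rightarrow> nat set \<Rightarrow> nat set \<Rightarrow> nat set set" where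
  "merge_blocks \<pi> \<beta>1 \<beta>2 = insert (\<beta>1 \<union> \<beta>2) (\<pi> - {\<beta>1, \<beta>2})"

definition red_eq :: "'q list \<Rightarrow> nat set set \<Rightarrow> nat \<Rightarrow> nat \<Rightarrow> bool" where
  "red_eq f \<pi> s t \<longleftrightarrow> s < length f \<and> t < length f \<and>
     (\<forall>r \<in> {min s t..max s t}. f ! r = f ! s \<and> (\<exists>\<beta>\<in>\<pi>. r \<in> \<beta> \<and> s \<in> \<beta>))"

text \<open>Representatives (least elements) of the equivalence classes; the quotient is
ordered and faced via these representatives.\<close>
definition red_reps :: "'q list \<Rightarrow> nat set set \<Rightarrow> nat set" where
  "red_reps f \<pi> = {j. j < length f \<and> \<not> (\<exists>s<j. red_eq f \<pi> s j)}"

definition red_faces :: "'q list \<Rightarrow> nat set set \<Rightarrow> 'q list" where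
  "red_faces f \<pi> = nths f (red_reps f \<pi>)"

definition red_part :: "'q list \<Rightarrow> nat set set \<Rightarrow> nat set set" where
  "red_part f \<pi> = (\<lambda>\<beta>. (\<lambda>j. rank (red_reps f \<pi>) (Min {s. red_eq f \<pi> s j})) ` \<beta>) ` \<pi>"

definition mirror :: "nat \<Rightarrow> nat set set \<Rightarrow> nat set set" where
  "mirror n \<pi> = (\<lambda>\<beta>. (\<lambda>j. n - 1 - j) ` \<beta>) ` \<pi>"

definition admissible :: "('q::finite list \<Rightarrow> nat set set \<Rightarrow> complex) \<Rightarrow> bool" where
  "admissible \<alpha> \<longleftrightarrow>
     (\<forall>f. f \<noteq> [] \<longrightarrow> \<alpha> f {{0..<length f}} = 1) \<and>
     (\<forall>f. length f = 2 \<longrightarrow> \<alpha> f {{0}, {1}} = 1) \<and>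
     (\<forall>f \<pi>. f \<noteq> [] \<and> \<pi> \<in> Pf f \<longrightarrow> \<alpha> f \<pi> = \<alpha> (red_faces f \<pi>) (red_part f \<pi>)) \<and>
     (\<forall>f \<pi> \<beta>1 \<beta>2 j. f \<noteq> [] \<and> \<pi> \<in> Pf f \<and> \<beta>1 \<in> \<pi> \<and> \<beta>2 \<in> \<pi> \<and> \<beta>1 \<noteq> \<beta>2 \<and>
         j \<in> \<beta>1 \<and> Suc j \<in> \<beta>2 \<and> f ! j = f ! Suc j \<longrightarrow>
         \<alpha> f \<pi> = \<alpha> f (merge_blocks \<pi> \<beta>1 \<beta>2) *
                 \<alpha> (nths f (\<beta>1 \<union> \<beta>2)) (relabel (\<beta>1 \<union> \<beta>2) {\<beta>1, \<beta>2})) \<and>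
     (\<forall>f g \<pi>. f \<noteq> [] \<and> length g = length f \<and> \<pi> \<in> Pf f \<and>
         (\<forall>l. 0 < l \<and> l < length f - 1 \<longrightarrow> f ! l = g ! l) \<longrightarrow> \<alpha> f \<pi> = \<alpha> g \<pi>) \<and>
     (\<forall>f \<pi>. f \<noteq> [] \<and> \<pi> \<in> Pf f \<longrightarrow> \<alpha> (rev f) (mirror (length f) \<pi>) = cnj (\<alpha> f \<pi>))"

fun mprod :: "'a::semigroup_mult list \<Rightarrow> 'a" where
  "mprod [x] = x"
| "mprod (x # y # zs) = x * mprod (y # zs)"

text \<open>Monomials in the variables x^Q_l (Q a face, l in I Q) are nonempty words of
pairs (Q, l).\<close>
definition is_monomial :: "('q \<Rightarrow> 'i set) \<Rightarrow> ('q \<times> 'i) list \<Rightarrow> bool" where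
  "is_monomial I Y \<longleftrightarrow> Y \<noteq> [] \<and> (\<forall>(Q, l) \<in> set Y. l \<in> I Q)"

definition moment :: "('a::ring \<Rightarrow> complex) \<Rightarrow> ('q \<Rightarrow> 'i \<Rightarrow> 'a) \<Rightarrow> ('q \<times> 'i) list \<Rightarrow> complex" where
  "moment \<Phi> a Y = \<Phi> (mprod (map (\<lambda>(Q, l). a Q l) Y))"

definition is_cumulant ::
  "('q::finite list \<Rightarrow> nat set set \<Rightarrow> complex) \<Rightarrow> ('a::ring \<Rightarrow> complex) \<Rightarrow>
   ('q \<Rightarrow> 'i \<Rightarrow> 'a) \<Rightarrow> ('q \<Rightarrow> 'i set) \<Rightarrow> (('q \<times> 'i) list \<Rightarrow> complex) \<Rightarrow> bool" where
  "is_cumulant \<alpha> \<Phi> a I c \<longleftrightarrow>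
     (\<forall>Y. is_monomial I Y \<longrightarrow>
        moment \<Phi> a Y = (\<Sum>\<pi> \<in> Pf (map fst Y). \<alpha> (map fst Y) \<pi> * (\<Prod>\<beta>\<in>\<pi>. c (nths Y \<beta>))))"

text \<open>The alpha-cumulant of a monomial: the unique value of any cumulant function.\<close>
definition cumulant ::
  "('q::finite list \<Rightarrow> nat set set \<Rightarrow> complex) \<Rightarrow> ('a::ring \<Rightarrow> complex) \<Rightarrow>
   ('q \<Rightarrow> 'i \<Rightarrow> 'a) \<Rightarrow> ('q \<Rightarrow> 'i set) \<Rightarrow> ('q \<times> 'i) list \<Rightarrow> complex" where
  "cumulant \<alpha> \<Phi> a I Y = (THE v. \<exists>c. is_cumulant \<alpha> \<Phi> a I c \<and> c Y = v)"

end

theory Submission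
  imports Defs
begin

lemma Pf_finite: "finite (Pf F)"
proof -
  have "Pf F \<subseteq> Pow (Pow {0..<length F})"
    unfolding Pf_def partition_on_def by auto
  then show ?thesis by (rule finite_subset) auto
qed

lemma Pf_block: assumes "\<pi> \<in> Pf F" "\<beta> \<in> \<pi>"
  shows "\<beta> \<subseteq> {0..<length F}" "\<beta> \<noteq> {}" "finite \<beta>"
  using assms unfolding Pf_def partition_on_def
  by (auto intro: finite_subset)

lemma Pf_one: "F \<noteq> [] \<Longrightarrow> {{0..<length F}} \<in> Pf F"
  unfolding Pf_def by (auto intro: partition_on_space)

lemma Pf_block_small: assumes "\<pi> \<in> Pf F" "\<beta> \<in> \<pi>" "\<pi> \<noteq> {{0..<length F}}"
  shows "card \<beta> < length F"
proof -
  have sub: "\<beta> \<subseteq> {0..<length F}" using Pf_block assms by blast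
  have "\<beta> \<noteq> {0..<length F}"
  proof
    assume eq: "\<beta> = {0..<length F}"
    have "\<pi> = {\<beta>}"
    proof (rule ccontr)
      assume "\<pi> \<noteq> {\<beta>}"
      then obtain \<gamma> where g: "\<gamma> \<in> \<pi>" "\<gamma> \<noteq> \<beta>" using assms(2) by blast
      have "\<gamma> \<noteq> {}" "\<gamma> \<subseteq> {0..<length F}" using Pf_block assms(1) g by blast+
      moreover have "\<gamma> \<inter> \<beta> = {}" using assms(1,2) g unfolding Pf_def partition_on_def
        by (auto simp: pairwise_def disjnt_def)
      ultimately show False using eq by blast
    qed
    then show False using assms(3) eq by simp
  qed
  then have "\<beta> \<subset> {0..<length F}" using sub by blast
  then show ?thesis by (metis card_atLeastLessThan card_seteq diff_zero finite_atLeastLessThan linorder_not_le psubset_eq)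
qed

lemma length_nths_sub: "\<beta> \<subseteq> {0..<length w} \<Longrightarrow> length (nths w \<beta>) = card \<beta>"
  by (simp add: length_nths) (metis (no_types, lifting) Collect_cong atLeastLessThan_iff subset_eq Collect_mem_eq)

lemma mprod_append: "xs \<noteq> [] \<Longrightarrow> ys \<noteq> [] \<Longrightarrow> mprod (xs @ ys) = mprod xs * mprod ys"
proof (induction xs rule: mprod.induct)
  case (1 x) then show ?case by (cases ys) auto
next
  case (2 x y zs) then show ?case by (simp add: mult.assoc)
qed simp

context
  fixes \<alpha> :: "'q::finite list \<Rightarrow> nat set set \<Rightarrow> complex" and \<Phi> :: "'a::ring \<Rightarrow> complex"
begin

definition mom :: "('q \<times> 'a) list \<Rightarrow> complex" where "mom w = \<Phi> (mprod (map snd w))"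

fun Kf :: "nat \<Rightarrow> ('q \<times> 'a) list \<Rightarrow> complex" where
  "Kf 0 w = 0"
| "Kf (Suc k) w = mom w - (\<Sum>\<pi> \<in> Pf (map fst w) - {{{0..<length w}}}.
        \<alpha> (map fst w) \<pi> * (\<Prod>\<beta>\<in>\<pi>. Kf k (nths w \<beta>)))"

definition K where "K w = Kf (length w) w"

lemma Kf_eq: "length w \<le> k \<Longrightarrow> length w \<le> k' \<Longrightarrow> 0 < length w \<Longrightarrow> Kf k w = Kf k' w"
proof (induction k arbitrary: k' w)
  case 0 then show ?case by simp
next
  case (Suc k)
  then obtain k'' where k': "k' = Suc k''" by (cases k') auto
  have "(\<Prod>\<beta>\<in>\<pi>. Kf k (nths w \<beta>)) = (\<Prod>\<beta>\<in>\<pi>. Kf k'' (nths w \<beta>))"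
    if "\<pi> \<in> Pf (map fst w) - {{{0..<length w}}}" for \<pi>
  proof (rule prod.cong[OF refl])
    fix \<beta> assume b: "\<beta> \<in> \<pi>"
    have pf: "\<pi> \<in> Pf (map fst w)" "\<pi> \<noteq> {{0..<length (map fst w)}}" using that by auto
    have "card \<beta> < length w" using Pf_block_small[OF pf(1) b pf(2)] by simp
    moreover have "\<beta> \<subseteq> {0..<length w}" "\<beta> \<noteq> {}" "finite \<beta>" using Pf_block[OF pf(1) b] by auto
    ultimately have "length (nths w \<beta>) < length w" "0 < length (nths w \<beta>)"
      using length_nths_sub[of \<beta> w] by (auto simp: card_gt_0_iff)
    then show "Kf k (nths w \<beta>) = Kf k'' (nths w \<beta>)"
      using Suc k' by (intro Suc.IH) auto
  qed
  then show ?case using k' by (auto intro!: sum.cong)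
qed

lemma K_expand: assumes adm: "admissible \<alpha>" and ne: "w \<noteq> []"
  shows "mom w = (\<Sum>\<pi> \<in> Pf (map fst w). \<alpha> (map fst w) \<pi> * (\<Prod>\<beta>\<in>\<pi>. K (nths w \<beta>)))"
proof -
  let ?F = "map fst w" and ?one = "{{0..<length w}}"
  have one: "?one \<in> Pf ?F" using Pf_one[of ?F] ne by simp
  have a1: "\<alpha> ?F ?one = 1" using adm ne unfolding admissible_def by auto
  have nw: "nths w {0..<length w} = w" by (rule nths_all) auto
  have Kw: "K w = mom w - (\<Sum>\<pi> \<in> Pf ?F - {?one}. \<alpha> ?F \<pi> * (\<Prod>\<beta>\<in>\<pi>. K (nths w \<beta>)))"
  proof -
    obtain k where k: "length w = Suc k" using ne by (cases w) auto
    have "(\<Prod>\<beta>\<in>\<pi>. Kf k (nths w \<beta>)) = (\<Prod>\<beta>\<in>\<pi>. K (nths w \<beta>))"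
      if "\<pi> \<in> Pf ?F - {?one}" for \<pi>
    proof (rule prod.cong[OF refl])
      fix \<beta> assume b: "\<beta> \<in> \<pi>"
      have pf: "\<pi> \<in> Pf ?F" "\<pi> \<noteq> {{0..<length ?F}}" using that by auto
      have "card \<beta> < length w" using Pf_block_small[OF pf(1) b pf(2)] by simp
      moreover have "\<beta> \<subseteq> {0..<length w}" "\<beta> \<noteq> {}" "finite \<beta>" using Pf_block[OF pf(1) b] by auto
      ultimately have "length (nths w \<beta>) < length w" "0 < length (nths w \<beta>)"
        using length_nths_sub[of \<beta> w] by (auto simp: card_gt_0_iff)
      then show "Kf k (nths w \<beta>) = K (nths w \<beta>)"
        unfolding K_def using k by (intro Kf_eq) auto
    qed
    then show ?thesis unfolding K_def using k by (auto intro!: sum.cong)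
  qed
  have "(\<Sum>\<pi> \<in> Pf ?F. \<alpha> ?F \<pi> * (\<Prod>\<beta>\<in>\<pi>. K (nths w \<beta>))) =
        \<alpha> ?F ?one * (\<Prod>\<beta>\<in>?one. K (nths w \<beta>)) + (\<Sum>\<pi> \<in> Pf ?F - {?one}. \<alpha> ?F \<pi> * (\<Prod>\<beta>\<in>\<pi>. K (nths w \<beta>)))"
    by (simp add: sum.remove[OF Pf_finite one])
  also have "\<dots> = mom w" using a1 nw Kw by simp
  finally show ?thesis by simp
qed

end

definition ev :: "('q \<Rightarrow> 'i \<Rightarrow> 'a) \<Rightarrow> ('q \<times> 'i) list \<Rightarrow> ('q \<times> 'a) list" where
  "ev a Y = map (\<lambda>(Q, l). (Q, a Q l)) Y"

lemma ev_nths: "ev a (nths Y \<beta>) = nths (ev a Y) \<beta>"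
  by (simp add: ev_def nths_map)

lemma ev_fst: "map fst (ev a Y) = map fst Y"
  by (induction Y) (auto simp: ev_def)

lemma ev_length: "length (ev a Y) = length Y" by (simp add: ev_def)

lemma moment_ev: "moment \<Phi> a Y = mom \<Phi> (ev a Y)"
  unfolding moment_def mom_def ev_def by (simp add: comp_def case_prod_unfold)

lemma monomial_nths: assumes "is_monomial I Y" "\<pi> \<in> Pf (map fst Y)" "\<beta> \<in> \<pi>"
  shows "is_monomial I (nths Y \<beta>)"
proof -
  have "\<beta> \<subseteq> {0..<length Y}" "\<beta> \<noteq> {}" "finite \<beta>" using Pf_block[OF assms(2,3)] by auto
  then have "length (nths Y \<beta>) > 0" using length_nths_sub[of \<beta> Y] by (auto simp: card_gt_0_iff)
  then show ?thesis using assms(1) set_nths_subset[of Y \<beta>] unfolding is_monomial_def by auto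
qed

lemma is_cumulant_K: assumes adm: "admissible \<alpha>"
  shows "is_cumulant \<alpha> \<Phi> a I (\<lambda>Y. K \<alpha> \<Phi> (ev a Y))"
  unfolding is_cumulant_def
proof (intro allI impI)
  fix Y assume m: "is_monomial I Y"
  then have "ev a Y \<noteq> []" by (auto simp: is_monomial_def ev_def)
  then show "moment \<Phi> a Y = (\<Sum>\<pi>\<in>Pf (map fst Y). \<alpha> (map fst Y) \<pi> * (\<Prod>\<beta>\<in>\<pi>. K \<alpha> \<Phi> (ev a (nths Y \<beta>))))"
    using K_expand[OF adm, of "ev a Y" \<Phi>] by (simp add: moment_ev ev_fst ev_nths)
qed

lemma is_cumulant_unique: assumes adm: "admissible \<alpha>" and c: "is_cumulant \<alpha> \<Phi> a I c"
  shows "is_monomial I Y \<Longrightarrow> c Y = K \<alpha> \<Phi> (ev a Y)"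
proof (induction "length Y" arbitrary: Y rule: less_induct)
  case less
  let ?F = "map fst Y" and ?one = "{{0..<length Y}}"
  have ne: "Y \<noteq> []" using less.prems by (simp add: is_monomial_def)
  have one: "?one \<in> Pf ?F" using Pf_one[of ?F] ne by simp
  have a1: "\<alpha> ?F ?one = 1" using adm ne unfolding admissible_def by auto
  have nw: "nths Y {0..<length Y} = Y" by (rule nths_all) auto
  have eq: "(\<Sum>\<pi> \<in> Pf ?F - {?one}. \<alpha> ?F \<pi> * (\<Prod>\<beta>\<in>\<pi>. c (nths Y \<beta>))) =
        (\<Sum>\<pi> \<in> Pf ?F - {?one}. \<alpha> ?F \<pi> * (\<Prod>\<beta>\<in>\<pi>. K \<alpha> \<Phi> (ev a (nths Y \<beta>))))"
  proof (intro sum.cong refl arg_cong2[where f="(*)"] prod.cong)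
    fix \<pi> \<beta> assume p: "\<pi> \<in> Pf ?F - {?one}" and b: "\<beta> \<in> \<pi>"
    have pf: "\<pi> \<in> Pf ?F" "\<pi> \<noteq> {{0..<length ?F}}" using p by auto
    have "card \<beta> < length Y" using Pf_block_small[OF pf(1) b pf(2)] by simp
    moreover have "\<beta> \<subseteq> {0..<length Y}" using Pf_block[OF pf(1) b] by auto
    ultimately have "length (nths Y \<beta>) < length Y" using length_nths_sub[of \<beta> Y] by auto
    then show "c (nths Y \<beta>) = K \<alpha> \<Phi> (ev a (nths Y \<beta>))"
      using less.hyps monomial_nths[OF less.prems pf(1) b] by blast
  qed
  have m1: "moment \<Phi> a Y = c Y + (\<Sum>\<pi> \<in> Pf ?F - {?one}. \<alpha> ?F \<pi> * (\<Prod>\<beta>\<in>\<pi>. c (nths Y \<beta>)))"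
    using c less.prems unfolding is_cumulant_def
    by (simp add: sum.remove[OF Pf_finite one] a1 nw)
  have m2: "moment \<Phi> a Y = K \<alpha> \<Phi> (ev a Y) + (\<Sum>\<pi> \<in> Pf ?F - {?one}. \<alpha> ?F \<pi> * (\<Prod>\<beta>\<in>\<pi>. K \<alpha> \<Phi> (ev a (nths Y \<beta>))))"
    using is_cumulant_K[OF adm, of \<Phi> a I] less.prems unfolding is_cumulant_def
    by (simp add: sum.remove[OF Pf_finite one] a1 nw)
  show ?case using m1 m2 eq by simp
qed

lemma cumulant_K: assumes adm: "admissible \<alpha>" and m: "is_monomial I Y"
  shows "cumulant \<alpha> \<Phi> a I Y = K \<alpha> \<Phi> (ev a Y)"
  unfolding cumulant_def
proof (rule the_equality)
  show "\<exists>c. is_cumulant \<alpha> \<Phi> a I c \<and> c Y = K \<alpha> \<Phi> (ev a Y)"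
    using is_cumulant_K[OF adm] by blast
next
  fix v assume "\<exists>c. is_cumulant \<alpha> \<Phi> a I c \<and> c Y = v"
  then show "v = K \<alpha> \<Phi> (ev a Y)" using is_cumulant_unique[OF adm _ m] by blast
qed

lemma rank_less_mono: assumes "finite B" "x \<in> B" "y \<in> B" "x < y" shows "rank B x < rank B y"
proof -
  have "{z \<in> B. z < x} \<subset> {z \<in> B. z < y}" using assms by auto
  then show ?thesis unfolding rank_def by (intro psubset_card_mono) (use assms in auto)
qed

lemma rank_inj: "finite B \<Longrightarrow> inj_on (rank B) B"
  by (rule inj_onI) (metis linorder_neqE_nat rank_less_mono less_irrefl)

lemma rank_lt: assumes "finite B" "x \<in> B" shows "rank B x < card B"
  unfolding rank_def using assms by (intro psubset_card_mono) auto

lemma rank_image: assumes "finite B" shows "rank B ` B = {0..<card B}"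
proof -
  have "rank B ` B \<subseteq> {0..<card B}" using rank_lt assms by auto
  moreover have "card (rank B ` B) = card B" using card_image[OF rank_inj[OF assms]] .
  ultimately show ?thesis by (metis card_atLeastLessThan card_subset_eq diff_zero finite_atLeastLessThan)
qed

lemma rank_Suc: assumes "p \<in> B" "Suc p \<in> B" "finite B" shows "rank B (Suc p) = Suc (rank B p)"
proof -
  have "{z \<in> B. z < Suc p} = insert p {z \<in> B. z < p}" using assms by auto
  then show ?thesis unfolding rank_def using assms by simp
qed

lemma rank_upt: "x \<le> m \<Longrightarrow> rank {0..<m} x = x"
proof -
  assume "x \<le> m"
  then have "{y \<in> {0..<m}. y < x} = {0..<x}" by auto
  then show ?thesis unfolding rank_def by simp
qed

lemma relabel_upt: "\<gamma>1 \<subseteq> {0..<m} \<Longrightarrow> \<gamma>2 \<subseteq> {0..<m} \<Longrightarrow> relabel {0..<m} {\<gamma>1, \<gamma>2} = {\<gamma>1, \<gamma>2}"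
proof -
  assume a: "\<gamma>1 \<subseteq> {0..<m}" "\<gamma>2 \<subseteq> {0..<m}"
  have "rank {0..<m} ` \<gamma> = \<gamma>" if "\<gamma> \<subseteq> {0..<m}" for \<gamma>
  proof -
    have "rank {0..<m} ` \<gamma> = id ` \<gamma>" using that rank_upt by (intro image_cong) auto
    then show ?thesis by simp
  qed
  then show ?thesis using a unfolding relabel_def by auto
qed

lemma nths_rank: assumes "finite B" "\<beta> \<subseteq> B" shows "nths (nths w B) (rank B ` \<beta>) = nths w \<beta>"
proof -
  have "{i \<in> B. \<exists>j \<in> rank B ` \<beta>. rank B i = j} = \<beta>"
    using assms inj_onD[OF rank_inj[OF assms(1)]] by auto
  then show ?thesis by (simp add: nths_nths rank_def[symmetric])
qed

definition splits :: "nat set \<Rightarrow> nat \<Rightarrow> (nat set \<times> nat set) set" where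
  "splits S p = {(\<beta>1, \<beta>2). \<beta>1 \<union> \<beta>2 = S \<and> \<beta>1 \<inter> \<beta>2 = {} \<and> p \<in> \<beta>1 \<and> Suc p \<in> \<beta>2}"

lemma splits_finite: "finite S \<Longrightarrow> finite (splits S p)"
  by (rule finite_subset[of _ "Pow S \<times> Pow S"]) (auto simp: splits_def)

context
  fixes \<alpha> :: "'q::finite list \<Rightarrow> nat set set \<Rightarrow> complex" and \<Phi> :: "'a::ring \<Rightarrow> complex"
begin

definition Spl :: "('q \<times> 'a) list \<Rightarrow> nat set \<Rightarrow> nat \<Rightarrow> complex" where
  "Spl w S p = (\<Sum>(\<beta>1, \<beta>2) \<in> splits S p. \<alpha> (nths (map fst w) S) (relabel S {\<beta>1, \<beta>2}) *
      K \<alpha> \<Phi> (nths w \<beta>1) * K \<alpha> \<Phi> (nths w \<beta>2))"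

lemma Spl_rank: assumes B: "B \<subseteq> {0..<length w}" and p: "p \<in> B" "Suc p \<in> B"
  shows "Spl (nths w B) {0..<card B} (rank B p) = Spl w B p"
proof -
  have fB: "finite B" using B finite_subset by blast
  let ?r = "rank B"
  let ?j = "\<lambda>(\<beta>1, \<beta>2). (?r ` \<beta>1, ?r ` \<beta>2)"
  let ?i = "\<lambda>(\<gamma>1, \<gamma>2). ({x \<in> B. ?r x \<in> \<gamma>1}, {x \<in> B. ?r x \<in> \<gamma>2})"
  have inj: "inj_on ?r B" by (rule rank_inj[OF fB])
  have img: "?r ` B = {0..<card B}" by (rule rank_image[OF fB])
  have rS: "?r (Suc p) = Suc (?r p)" by (rule rank_Suc[OF p fB])
  have lenB: "length (nths w B) = card B" using length_nths_sub[OF B] .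
  have fstB: "nths (map fst (nths w B)) {0..<card B} = nths (map fst w) B"
  proof -
    have "nths (map fst (nths w B)) {0..<card B} = map fst (nths w B)"
      by (rule nths_all) (simp add: lenB)
    then show ?thesis by (simp add: nths_map)
  qed
  show ?thesis unfolding Spl_def
  proof (rule sym, rule sum.reindex_bij_witness[where i = ?i and j = ?j])
    fix b assume b: "b \<in> splits B p"
    obtain \<beta>1 \<beta>2 where bb: "b = (\<beta>1, \<beta>2)" by (cases b)
    have sub: "\<beta>1 \<subseteq> B" "\<beta>2 \<subseteq> B" using b bb by (auto simp: splits_def)
    have "{x \<in> B. ?r x \<in> ?r ` \<beta>1} = \<beta>1" "{x \<in> B. ?r x \<in> ?r ` \<beta>2} = \<beta>2"
      using sub inj by (auto dest: inj_onD)
    then show "?i (?j b) = b" using bb by simp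
    have "?r ` \<beta>1 \<inter> ?r ` \<beta>2 = {}"
    proof -
      have "x1 = x2" if "x1 \<in> \<beta>1" "x2 \<in> \<beta>2" "?r x1 = ?r x2" for x1 x2
        using inj_onD[OF inj that(3)] that(1,2) sub by blast
      then show ?thesis using b bb unfolding splits_def by auto
    qed
    then show "?j b \<in> splits {0..<card B} (?r p)"
      using b bb img rS unfolding splits_def by (auto simp flip: image_Un rS)
    have sub2: "?r ` \<beta>1 \<subseteq> {0..<card B}" "?r ` \<beta>2 \<subseteq> {0..<card B}" using sub img by auto
    show "(case ?j b of (\<gamma>1, \<gamma>2) \<Rightarrow> \<alpha> (nths (map fst (nths w B)) {0..<card B}) (relabel {0..<card B} {\<gamma>1, \<gamma>2}) *
          K \<alpha> \<Phi> (nths (nths w B) \<gamma>1) * K \<alpha> \<Phi> (nths (nths w B) \<gamma>2)) =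
        (case b of (\<beta>1, \<beta>2) \<Rightarrow> \<alpha> (nths (map fst w) B) (relabel B {\<beta>1, \<beta>2}) *
          K \<alpha> \<Phi> (nths w \<beta>1) * K \<alpha> \<Phi> (nths w \<beta>2))"
      using bb sub sub2 fstB relabel_upt[OF sub2] nths_rank[OF fB sub(1), of w] nths_rank[OF fB sub(2), of w]
      by (simp add: relabel_def)
  next
    fix a assume a: "a \<in> splits {0..<card B} (?r p)"
    obtain \<gamma>1 \<gamma>2 where aa: "a = (\<gamma>1, \<gamma>2)" by (cases a)
    have sub: "\<gamma>1 \<subseteq> ?r ` B" "\<gamma>2 \<subseteq> ?r ` B" using a aa img by (auto simp: splits_def)
    have "?r ` {x \<in> B. ?r x \<in> \<gamma>1} = \<gamma>1" "?r ` {x \<in> B. ?r x \<in> \<gamma>2} = \<gamma>2" using sub by auto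
    then show "?j (?i a) = a" using aa by simp
    show "?i a \<in> splits B p"
      using a aa img inj rS p unfolding splits_def by (auto dest: inj_onD)
  qed
qed

end

definition gm :: "nat \<Rightarrow> nat \<Rightarrow> nat" where "gm p j = (if j \<le> p then j else j - 1)"
definition hm :: "nat \<Rightarrow> nat \<Rightarrow> nat" where "hm p r = (if r \<le> p then r else Suc r)"

lemma gm_hm[simp]: "gm p (hm p r) = r" by (simp add: gm_def hm_def)

lemma gm_mono: "a \<le> b \<Longrightarrow> gm p a \<le> gm p b" unfolding gm_def by auto

lemma gm_interval: assumes "a \<le> b" shows "gm p ` {a..b} = {gm p a..gm p b}"
proof
  show "gm p ` {a..b} \<subseteq> {gm p a..gm p b}" using gm_mono by auto
next
  show "{gm p a..gm p b} \<subseteq> gm p ` {a..b}"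
  proof
    fix r assume r: "r \<in> {gm p a..gm p b}"
    let ?s = "max a (if r \<le> p then r else Suc r)"
    have "?s \<in> {a..b}" "gm p ?s = r" using r assms by (auto simp: gm_def split: if_splits)
    then show "r \<in> gm p ` {a..b}" by (metis image_eqI)
  qed
qed

lemma gm_min: "gm p (min s t) = min (gm p s) (gm p t)"
  unfolding gm_def min_def by auto
lemma gm_max: "gm p (max s t) = max (gm p s) (gm p t)"
  unfolding gm_def max_def by auto

lemma nths_two: "nths [a, b] A = (if 0 \<in> A then [a] else []) @ (if 1 \<in> A then [b] else [])"
  by (simp add: nths_Cons)

lemma nths_cong_lt: "(\<And>j. j < length xs \<Longrightarrow> j \<in> A \<longleftrightarrow> j \<in> B) \<Longrightarrow> nths xs A = nths xs B"
  unfolding nths_def by (rule arg_cong[where f="map fst"], rule filter_cong) (auto simp: set_zip)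

lemma nths_3: "nths (u @ [x, y] @ v) A =
   nths u A @ (if length u \<in> A then [x] else []) @ (if Suc (length u) \<in> A then [y] else []) @
   nths v {j. j + Suc (Suc (length u)) \<in> A}"
  by (simp add: nths_append nths_Cons)

lemma nths_2: "nths (u @ [z] @ v) A =
   nths u A @ (if length u \<in> A then [z] else []) @ nths v {j. j + Suc (length u) \<in> A}"
  by (simp add: nths_append nths_Cons)

locale redsetup =
  fixes u v :: "'q::finite list" and c :: 'q and \<pi> :: "nat set set" and B0 :: "nat set"
  assumes pi: "\<pi> \<in> Pf (u @ [c, c] @ v)" and B0: "B0 \<in> \<pi>" "length u \<in> B0" "Suc (length u) \<in> B0"
begin

abbreviation "p \<equiv> length u"
abbreviation "F \<equiv> u @ [c, c] @ v"
abbreviation "F' \<equiv> u @ [c] @ v"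
abbreviation "N \<equiv> length F"
abbreviation "g \<equiv> gm p"
definition "\<pi>' = (\<lambda>\<beta>. g ` \<beta>) ` \<pi>"

lemma part: "partition_on {0..<N} \<pi>" using pi by (simp add: Pf_def)

lemma blocks_disj: "\<beta>1 \<in> \<pi> \<Longrightarrow> \<beta>2 \<in> \<pi> \<Longrightarrow> j \<in> \<beta>1 \<Longrightarrow> j \<in> \<beta>2 \<Longrightarrow> \<beta>1 = \<beta>2"
  using part unfolding partition_on_def pairwise_def disjnt_def by blast

lemma block_sub: "\<beta> \<in> \<pi> \<Longrightarrow> \<beta> \<subseteq> {0..<N}" using part unfolding partition_on_def by blast

lemma cover: "j < N \<Longrightarrow> \<exists>\<beta>\<in>\<pi>. j \<in> \<beta>" using part unfolding partition_on_def by auto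

lemma g_eq: "g a = g b \<Longrightarrow> a \<noteq> b \<Longrightarrow> {a, b} = {p, Suc p}"
  by (auto simp: gm_def split: if_splits)

lemma sat: assumes "\<beta> \<in> \<pi>" shows "g j \<in> g ` \<beta> \<longleftrightarrow> j \<in> \<beta>"
proof
  assume "g j \<in> g ` \<beta>"
  then obtain b where b: "b \<in> \<beta>" "g j = g b" by auto
  show "j \<in> \<beta>"
  proof (cases "j = b")
    case False
    then have "{j, b} = {p, Suc p}" using g_eq b by metis
    then have "j \<in> {p, Suc p}" "b \<in> {p, Suc p}" by blast+
    then have "b \<in> B0" "j \<in> B0" using B0 by auto
    then show ?thesis using blocks_disj[OF assms B0(1) b(1)] by simp
  qed (use b in simp)
qed auto

lemma g_lt: "j < N \<Longrightarrow> g j < length F'" by (auto simp: gm_def)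

lemma g_img: "g ` {0..<N} = {0..<length F'}"
proof -
  have "g ` {0..<N} = g ` {0..N-1}" by (intro arg_cong[where f="image g"]) auto
  also have "\<dots> = {g 0..g (N-1)}" by (rule gm_interval) simp
  also have "\<dots> = {0..<length F'}" by (auto simp: gm_def)
  finally show ?thesis .
qed

lemma pi'_Pf: "\<pi>' \<in> Pf F'"
  unfolding Pf_def
proof (intro CollectI partition_onI)
  have "\<Union> \<pi>' = g ` \<Union> \<pi>" unfolding \<pi>'_def by auto
  then show "\<Union> \<pi>' = {0..<length F'}"
    using part g_img unfolding partition_on_def by auto
  show "{} \<notin> \<pi>'" using part unfolding \<pi>'_def partition_on_def by auto
  fix b1 b2 assume "b1 \<in> \<pi>'" "b2 \<in> \<pi>'" "b1 \<noteq> b2"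
  then obtain \<beta>1 \<beta>2 where bb: "\<beta>1 \<in> \<pi>" "\<beta>2 \<in> \<pi>" "b1 = g ` \<beta>1" "b2 = g ` \<beta>2" "\<beta>1 \<noteq> \<beta>2"
    unfolding \<pi>'_def by auto
  show "disjnt b1 b2"
    unfolding disjnt_def
  proof (rule ccontr)
    assume "b1 \<inter> b2 \<noteq> {}"
    then obtain j where "j \<in> \<beta>1" "g j \<in> g ` \<beta>2" using bb by auto
    then have "j \<in> \<beta>2" using sat[OF bb(2)] by simp
    then show False using blocks_disj[OF bb(1,2) \<open>j \<in> \<beta>1\<close>] bb(5) by simp
  qed
qed

lemma F_nth: "j < N \<Longrightarrow> F ! j = F' ! (g j)"
  by (cases "j < p"; cases "j = p"; cases "j = Suc p") (auto simp: gm_def nth_append nth_Cons')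

lemma same_block: assumes "r < N" "s < N"
  shows "(\<exists>\<beta>\<in>\<pi>. r \<in> \<beta> \<and> s \<in> \<beta>) \<longleftrightarrow> (\<exists>\<beta>\<in>\<pi>'. g r \<in> \<beta> \<and> g s \<in> \<beta>)"
  unfolding \<pi>'_def using sat by auto

lemma red_eq_iff: "red_eq F \<pi> s t \<longleftrightarrow> s < N \<and> t < N \<and> red_eq F' \<pi>' (g s) (g t)"
proof (cases "s < N \<and> t < N")
  case True
  then have st: "s < N" "t < N" by auto
  have rng: "r < N" if "r \<in> {min s t..max s t}" for r using that st by auto
  have "(\<forall>r\<in>{min s t..max s t}. F ! r = F ! s \<and> (\<exists>\<beta>\<in>\<pi>. r \<in> \<beta> \<and> s \<in> \<beta>)) \<longleftrightarrow>
        (\<forall>r\<in>{min s t..max s t}. F' ! (g r) = F' ! (g s) \<and> (\<exists>\<beta>\<in>\<pi>'. g r \<in> \<beta> \<and> g s \<in> \<beta>))"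
    using rng st F_nth same_block by (auto)
  also have "\<dots> \<longleftrightarrow> (\<forall>r\<in>g ` {min s t..max s t}. F' ! r = F' ! (g s) \<and> (\<exists>\<beta>\<in>\<pi>'. r \<in> \<beta> \<and> g s \<in> \<beta>))"
    by auto
  also have "g ` {min s t..max s t} = {min (g s) (g t)..max (g s) (g t)}"
    by (simp add: gm_interval gm_min gm_max)
  finally show ?thesis using st g_lt unfolding red_eq_def by auto
qed (auto simp: red_eq_def)

end

lemma red_eq_refl: assumes "\<pi> \<in> Pf G" "r < length G" shows "red_eq G \<pi> r r"
proof -
  have "partition_on {0..<length G} \<pi>" using assms(1) by (simp add: Pf_def)
  then have "r \<in> \<Union>\<pi>" using assms(2) unfolding partition_on_def by auto
  then obtain \<beta> where "\<beta> \<in> \<pi>" "r \<in> \<beta>" by auto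
  then show ?thesis using assms(2) unfolding red_eq_def by auto
qed

lemma adm_iii: assumes "admissible \<alpha>"
  shows "f \<noteq> [] \<Longrightarrow> \<pi> \<in> Pf f \<Longrightarrow> \<alpha> f \<pi> = \<alpha> (red_faces f \<pi>) (red_part f \<pi>)"
proof -
  have "\<forall>f \<pi>. f \<noteq> [] \<and> \<pi> \<in> Pf f \<longrightarrow> \<alpha> f \<pi> = \<alpha> (red_faces f \<pi>) (red_part f \<pi>)"
    using conjunct1[OF conjunct2[OF conjunct2[OF assms[unfolded admissible_def]]]] .
  then show "f \<noteq> [] \<Longrightarrow> \<pi> \<in> Pf f \<Longrightarrow> \<alpha> f \<pi> = \<alpha> (red_faces f \<pi>) (red_part f \<pi>)" by blast
qed

lemma hm_le: "m \<le> gm p s \<Longrightarrow> hm p m \<le> s" by (auto simp: hm_def gm_def split: if_splits)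

lemma gm_lt: "y < hm p m \<Longrightarrow> y \<noteq> Suc p \<Longrightarrow> gm p y < m" by (auto simp: hm_def gm_def split: if_splits)

lemma hm_lt_iff: "hm p a < hm p b \<longleftrightarrow> a < b" by (auto simp: hm_def)

context redsetup
begin

abbreviation "R \<equiv> red_reps F \<pi>"
abbreviation "R' \<equiv> red_reps F' \<pi>'"

lemma ex_before: assumes j: "j < N"
  shows "(\<exists>s<j. red_eq F \<pi> s j) \<longleftrightarrow> j = Suc p \<or> (\<exists>s'<g j. red_eq F' \<pi>' s' (g j))"
proof
  assume "\<exists>s<j. red_eq F \<pi> s j"
  then obtain s where s: "s < j" "red_eq F \<pi> s j" by auto
  then have r: "red_eq F' \<pi>' (g s) (g j)" using red_eq_iff by auto
  show "j = Suc p \<or> (\<exists>s'<g j. red_eq F' \<pi>' s' (g j))"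
  proof (cases "g s < g j")
    case True then show ?thesis using r by blast
  next
    case False
    then have "g s = g j" using gm_mono[of s j p] s(1) by simp
    then have "{s, j} = {p, Suc p}" using g_eq s(1) by (metis less_irrefl)
    then show ?thesis using s(1) by (auto simp: doubleton_eq_iff)
  qed
next
  assume "j = Suc p \<or> (\<exists>s'<g j. red_eq F' \<pi>' s' (g j))"
  then show "\<exists>s<j. red_eq F \<pi> s j"
  proof
    assume js: "j = Suc p"
    have "red_eq F' \<pi>' p p" by (rule red_eq_refl[OF pi'_Pf]) simp
    then have "red_eq F \<pi> p j" using red_eq_iff js j by (simp add: gm_def)
    then show ?thesis using js by blast
  next
    assume "\<exists>s'<g j. red_eq F' \<pi>' s' (g j)"
    then obtain s' where s': "s' < g j" "red_eq F' \<pi>' s' (g j)" by auto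
    have "hm p s' < j"
    proof (rule ccontr)
      assume "\<not> hm p s' < j"
      then have "g j \<le> g (hm p s')" using gm_mono[of j "hm p s'" p] by simp
      then show False using s'(1) by simp
    qed
    moreover have "red_eq F \<pi> (hm p s') j" using red_eq_iff s' j calculation by simp
    ultimately show ?thesis by blast
  qed
qed

lemma R_eq: "R = {j. j < N \<and> j \<noteq> Suc p \<and> g j \<in> R'}"
proof -
  have "(j \<in> R) = (j < N \<and> j \<noteq> Suc p \<and> g j \<in> R')" for j
  proof (cases "j < N")
    case True
    then show ?thesis using ex_before[OF True] g_lt[OF True] unfolding red_reps_def by blast
  qed (simp add: red_reps_def)
  then show ?thesis by blast
qed

lemma red_faces_eq: "red_faces F \<pi> = red_faces F' \<pi>'"
proof -
  have "Suc p \<notin> R" using R_eq by simp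
  moreover have "p \<in> R \<longleftrightarrow> p \<in> R'" using R_eq by (auto simp: gm_def red_reps_def)
  moreover have "nths u R = nths u R'"
    by (rule nths_cong_lt) (subst R_eq, auto simp: gm_def)
  moreover have "{j. j + Suc (Suc p) \<in> R} = {j. j + Suc p \<in> R'}"
  proof -
    have lt: "x \<in> R' \<Longrightarrow> x < length F'" for x by (simp add: red_reps_def)
    have "j + Suc (Suc p) \<in> R \<longleftrightarrow> j + Suc p \<in> R'" for j
      using lt[of "j + Suc p"] by (subst R_eq) (auto simp: gm_def)
    then show ?thesis by auto
  qed
  ultimately show ?thesis unfolding red_faces_def nths_3 nths_2 by simp
qed

lemma Min_class: assumes j: "j < N"
  shows "Min {s. red_eq F \<pi> s j} = hm p (Min {s. red_eq F' \<pi>' s (g j)})"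
proof -
  let ?C = "{s. red_eq F' \<pi>' s (g j)}"
  have fin: "finite ?C" by (rule finite_subset[of _ "{..<length F'}"]) (auto simp: red_eq_def)
  have ne: "g j \<in> ?C" using red_eq_refl[OF pi'_Pf g_lt[OF j]] by simp
  have mC: "Min ?C \<in> ?C" using fin ne by (intro Min_in) auto
  have mle: "\<And>s. s \<in> ?C \<Longrightarrow> Min ?C \<le> s" using fin by simp
  have mlt: "Min ?C < length F'" using mC red_eq_def[of F' \<pi>' "Min ?C" "g j"] by simp
  have eq: "{s. red_eq F \<pi> s j} = {s. s < N \<and> g s \<in> ?C}" using red_eq_iff[of _ j] j by blast
  show ?thesis unfolding eq
  proof (rule Min_eqI)
    show "finite {s. s < N \<and> g s \<in> ?C}" by simp
    have "hm p (Min ?C) < N" using mlt by (simp add: hm_def)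
    then show "hm p (Min ?C) \<in> {s. s < N \<and> g s \<in> ?C}" using mC by simp
    fix s assume "s \<in> {s. s < N \<and> g s \<in> ?C}"
    then have "Min ?C \<le> g s" using mle by auto
    then show "hm p (Min ?C) \<le> s" by (rule hm_le)
  qed
qed

lemma memR: "y \<in> R \<longleftrightarrow> y < N \<and> y \<noteq> Suc p \<and> g y \<in> R'"
  by (subst R_eq) simp

lemma R'_lt: "y \<in> R' \<Longrightarrow> y < length F'" by (simp add: red_reps_def)

lemma rank_hm: assumes m: "m < length F'" shows "rank R (hm p m) = rank R' m"
proof -
  have img: "g ` {y \<in> R. y < hm p m} = {y \<in> R'. y < m}"
  proof
    show "g ` {y \<in> R. y < hm p m} \<subseteq> {y \<in> R'. y < m}"
    proof
      fix x assume "x \<in> g ` {y \<in> R. y < hm p m}"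
      then obtain y where y: "y \<in> R" "y < hm p m" "x = g y" by blast
      then have "y \<noteq> Suc p" "g y \<in> R'" using memR by auto
      moreover have "g y < m" using y(2) \<open>y \<noteq> Suc p\<close> by (rule gm_lt)
      ultimately show "x \<in> {y \<in> R'. y < m}" using y(3) by simp
    qed
    show "{y \<in> R'. y < m} \<subseteq> g ` {y \<in> R. y < hm p m}"
    proof
      fix y assume y: "y \<in> {y \<in> R'. y < m}"
      then have yl: "y < length F'" using R'_lt by blast
      have "hm p y < N" using yl by (simp add: hm_def)
      moreover have "hm p y \<noteq> Suc p" by (simp add: hm_def)
      ultimately have "hm p y \<in> R" using y memR by simp
      moreover have "hm p y < hm p m" using y hm_lt_iff by simp
      ultimately have "hm p y \<in> {y \<in> R. y < hm p m}" by simp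
      then show "y \<in> g ` {y \<in> R. y < hm p m}" by (metis gm_hm image_eqI)
    qed
  qed
  have inj: "inj_on g {y \<in> R. y < hm p m}"
  proof (rule inj_onI)
    fix a b assume a: "a \<in> {y \<in> R. y < hm p m}" and b: "b \<in> {y \<in> R. y < hm p m}" and e: "g a = g b"
    show "a = b"
    proof (rule ccontr)
      assume "a \<noteq> b"
      then have "{a, b} = {p, Suc p}" using g_eq e by blast
      then have "a = Suc p \<or> b = Suc p" by (auto simp: doubleton_eq_iff)
      then show False using a b memR by auto
    qed
  qed
  show ?thesis unfolding rank_def using card_image[OF inj] img by simp
qed

lemma red_part_eq: "red_part F \<pi> = red_part F' \<pi>'"
proof -
  let ?f1 = "\<lambda>j. rank R (Min {s. red_eq F \<pi> s j})"
  let ?f2 = "\<lambda>j. rank R' (Min {s. red_eq F' \<pi>' s j})"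
  have f: "?f1 j = ?f2 (g j)" if j: "j < N" for j
  proof -
    let ?C = "{s. red_eq F' \<pi>' s (g j)}"
    have ne: "g j \<in> ?C" using red_eq_refl[OF pi'_Pf g_lt[OF j]] by simp
    have fin: "finite ?C" by (rule finite_subset[of _ "{..<length F'}"]) (auto simp: red_eq_def)
    have "Min ?C \<in> ?C" using fin ne by (intro Min_in) auto
    then have lt: "Min ?C < length F'" using red_eq_def[of F' \<pi>' "Min ?C" "g j"] by simp
    have "?f1 j = rank R (hm p (Min ?C))" by (simp only: Min_class[OF j])
    also have "\<dots> = rank R' (Min ?C)" by (rule rank_hm[OF lt])
    finally show ?thesis .
  qed
  have "(\<lambda>\<beta>. ?f1 ` \<beta>) ` \<pi> = (\<lambda>\<beta>. ?f2 ` (g ` \<beta>)) ` \<pi>"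
  proof (rule image_cong[OF refl])
    fix \<beta> assume "\<beta> \<in> \<pi>"
    then have "\<beta> \<subseteq> {0..<N}" by (rule block_sub)
    then show "?f1 ` \<beta> = ?f2 ` (g ` \<beta>)" unfolding image_image
      by (intro image_cong[OF refl] f) auto
  qed
  then show ?thesis unfolding red_part_def \<pi>'_def image_image .
qed

lemma alpha_eq: assumes adm: "admissible \<alpha>" shows "\<alpha> F \<pi> = \<alpha> F' \<pi>'"
proof -
  note iii = adm_iii[OF adm]
  have "\<alpha> F \<pi> = \<alpha> (red_faces F \<pi>) (red_part F \<pi>)" by (rule iii[OF _ pi]) simp
  also have "\<dots> = \<alpha> (red_faces F' \<pi>') (red_part F' \<pi>')" by (simp only: red_faces_eq red_part_eq)
  also have "\<dots> = \<alpha> F' \<pi>'" by (rule iii[OF _ pi'_Pf, symmetric]) simp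
  finally show ?thesis .
qed

end

definition blk :: "nat set set \<Rightarrow> nat \<Rightarrow> nat set" where
  "blk \<pi> j = (THE \<beta>. \<beta> \<in> \<pi> \<and> j \<in> \<beta>)"

lemma blk_eq: assumes "disjoint \<pi>" "\<beta> \<in> \<pi>" "j \<in> \<beta>" shows "blk \<pi> j = \<beta>"
  unfolding blk_def
proof (rule the_equality)
  show "\<beta> \<in> \<pi> \<and> j \<in> \<beta>" using assms by simp
  fix \<gamma> assume "\<gamma> \<in> \<pi> \<and> j \<in> \<gamma>"
  then show "\<gamma> = \<beta>" using assms unfolding pairwise_def disjnt_def by blast
qed

lemma blk_in: assumes "partition_on S \<pi>" "j \<in> S" shows "blk \<pi> j \<in> \<pi>" "j \<in> blk \<pi> j"
proof -
  obtain \<beta> where "\<beta> \<in> \<pi>" "j \<in> \<beta>" using assms unfolding partition_on_def by blast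
  moreover have "disjoint \<pi>" using assms partition_onD2 by blast
  ultimately show "blk \<pi> j \<in> \<pi>" "j \<in> blk \<pi> j" using blk_eq by auto
qed

lemma gm_eq_lt: "gm p b = j \<Longrightarrow> j < p \<Longrightarrow> b = j"
  unfolding gm_def by (cases "b \<le> p") auto

lemma gm_eq_p: "gm p b = p \<Longrightarrow> b = p \<or> b = Suc p"
  unfolding gm_def by (cases "b \<le> p") auto

lemma gm_eq_gt: "gm p b = j + Suc p \<Longrightarrow> b = j + Suc (Suc p)"
  unfolding gm_def by (cases "b \<le> p") auto

lemma gimg_lt: "j < p \<Longrightarrow> (j \<in> gm p ` \<beta> \<longleftrightarrow> j \<in> \<beta>)"
proof
  assume "j < p" "j \<in> gm p ` \<beta>"
  then obtain b where "b \<in> \<beta>" "gm p b = j" by auto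
  then show "j \<in> \<beta>" using gm_eq_lt[of p b j] \<open>j < p\<close> by simp
next
  assume "j < p" "j \<in> \<beta>"
  moreover have "gm p j = j" using \<open>j < p\<close> by (simp add: gm_def)
  ultimately show "j \<in> gm p ` \<beta>" by (metis image_eqI)
qed

lemma gimg_p: "p \<in> gm p ` \<beta> \<longleftrightarrow> p \<in> \<beta> \<or> Suc p \<in> \<beta>"
proof
  assume "p \<in> gm p ` \<beta>"
  then obtain b where "b \<in> \<beta>" "gm p b = p" by auto
  then show "p \<in> \<beta> \<or> Suc p \<in> \<beta>" using gm_eq_p[of p b] by auto
next
  have "gm p p = p" "gm p (Suc p) = p" by (simp_all add: gm_def)
  moreover assume "p \<in> \<beta> \<or> Suc p \<in> \<beta>"
  ultimately show "p \<in> gm p ` \<beta>" by (metis image_eqI)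
qed

lemma gimg_gt: "(j + Suc p \<in> gm p ` \<beta>) \<longleftrightarrow> (j + Suc (Suc p) \<in> \<beta>)"
proof
  assume "j + Suc p \<in> gm p ` \<beta>"
  then obtain b where "b \<in> \<beta>" "gm p b = j + Suc p" by auto
  then show "j + Suc (Suc p) \<in> \<beta>" using gm_eq_gt[of p b j] by simp
next
  assume "j + Suc (Suc p) \<in> \<beta>"
  moreover have "gm p (j + Suc (Suc p)) = j + Suc p" by (simp add: gm_def)
  ultimately show "j + Suc p \<in> gm p ` \<beta>" by (metis image_eqI)
qed

lemma nths_g_out: assumes "length u \<notin> \<beta>" "Suc (length u) \<notin> \<beta>"
  shows "nths (u @ [z] @ v) (gm (length u) ` \<beta>) = nths (u @ [x, y] @ v) \<beta>"
proof -
  have "nths u (gm (length u) ` \<beta>) = nths u \<beta>" by (rule nths_cong_lt) (simp add: gimg_lt)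
  moreover have "{j. j + Suc (length u) \<in> gm (length u) ` \<beta>} = {j. j + Suc (Suc (length u)) \<in> \<beta>}"
    using gimg_gt by blast
  ultimately show ?thesis unfolding nths_2 nths_3 using assms gimg_p by simp
qed

lemma nths_g_in: assumes "length u \<in> \<beta>" "Suc (length u) \<in> \<beta>"
  shows "nths (u @ [z] @ v) (gm (length u) ` \<beta>) =
           nths u \<beta> @ [z] @ nths v {j. j + Suc (Suc (length u)) \<in> \<beta>}"
    "nths (u @ [x, y] @ v) \<beta> = nths u \<beta> @ [x, y] @ nths v {j. j + Suc (Suc (length u)) \<in> \<beta>}"
    "length (nths u \<beta>) = rank \<beta> (length u)"
proof -
  have "nths u (gm (length u) ` \<beta>) = nths u \<beta>" by (rule nths_cong_lt) (simp add: gimg_lt)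
  moreover have "{j. j + Suc (length u) \<in> gm (length u) ` \<beta>} = {j. j + Suc (Suc (length u)) \<in> \<beta>}"
    using gimg_gt by blast
  ultimately show "nths (u @ [z] @ v) (gm (length u) ` \<beta>) =
           nths u \<beta> @ [z] @ nths v {j. j + Suc (Suc (length u)) \<in> \<beta>}"
    unfolding nths_2 using assms gimg_p by simp
  show "nths (u @ [x, y] @ v) \<beta> = nths u \<beta> @ [x, y] @ nths v {j. j + Suc (Suc (length u)) \<in> \<beta>}"
    unfolding nths_3 using assms by simp
  show "length (nths u \<beta>) = rank \<beta> (length u)"
    unfolding length_nths rank_def by (rule arg_cong[where f=card]) auto
qed

lemma Pf_finite_blocks: "\<pi> \<in> Pf F \<Longrightarrow> finite \<pi>"
proof -
  assume "\<pi> \<in> Pf F"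
  then have "\<pi> \<subseteq> Pow {0..<length F}" unfolding Pf_def partition_on_def by auto
  then show "finite \<pi>" by (rule finite_subset) simp
qed

lemma Pf_disjoint: "\<pi> \<in> Pf F \<Longrightarrow> disjoint \<pi>" unfolding Pf_def partition_on_def by simp

lemma Pf_blk: "\<pi> \<in> Pf F \<Longrightarrow> j < length F \<Longrightarrow> blk \<pi> j \<in> \<pi> \<and> j \<in> blk \<pi> j"
  unfolding Pf_def using blk_in[of "{0..<length F}" \<pi> j] by simp

lemma surj_gm: "surj (gm p)" by (metis gm_hm surjI)

locale wsetup =
  fixes \<alpha> :: "'q::finite list \<Rightarrow> nat set set \<Rightarrow> complex" and \<Phi> :: "'a::ring \<Rightarrow> complex"
    and u v :: "('q \<times> 'a) list" and x y :: "'q \<times> 'a"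
  assumes adm: "admissible \<alpha>" and fxy: "fst x = fst y"
begin

abbreviation "p \<equiv> length u"
abbreviation "z \<equiv> (fst x, snd x * snd y)"
abbreviation "w \<equiv> u @ [x, y] @ v"
abbreviation "wt \<equiv> u @ [z] @ v"
abbreviation "F \<equiv> map fst w"
abbreviation "Ft \<equiv> map fst wt"
abbreviation "N \<equiv> length w"
abbreviation "g \<equiv> gm p"

definition "A = {\<pi> \<in> Pf F. Suc p \<in> blk \<pi> p}"
definition "Bs = {\<pi> \<in> Pf F. Suc p \<notin> blk \<pi> p}"
definition "Gm \<pi> = (\<lambda>\<beta>. g ` \<beta>) ` \<pi>"
definition "Ei \<pi> = (\<lambda>\<beta>. g -` \<beta>) ` \<pi>"

lemma F_eq: "F = map fst u @ [fst x, fst x] @ map fst v" using fxy by simp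
lemma Ft_eq: "Ft = map fst u @ [fst x] @ map fst v" by simp

lemma A_red: assumes "\<pi> \<in> A" shows "redsetup (map fst u) (map fst v) (fst x) \<pi> (blk \<pi> p)"
proof -
  have pf: "\<pi> \<in> Pf F" and s: "Suc p \<in> blk \<pi> p" using assms by (auto simp: A_def)
  have "blk \<pi> p \<in> \<pi> \<and> p \<in> blk \<pi> p" using Pf_blk[OF pf] by simp
  then show ?thesis using pf s F_eq by unfold_locales auto
qed

lemma A_Gm: "\<pi> \<in> A \<Longrightarrow> Gm \<pi> = redsetup.\<pi>' (map fst u) \<pi>"
  using redsetup.\<pi>'_def[OF A_red] by (simp add: Gm_def)

lemma A_blk: assumes "\<pi> \<in> A" shows "blk \<pi> p \<in> \<pi>" "p \<in> blk \<pi> p" "Suc p \<in> blk \<pi> p"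
  using assms Pf_blk[of \<pi> F p] by (auto simp: A_def)

lemma A_sat: assumes "\<pi> \<in> A" "\<beta> \<in> \<pi>" shows "g j \<in> g ` \<beta> \<longleftrightarrow> j \<in> \<beta>"
  using redsetup.sat[OF A_red[OF assms(1)] assms(2)] by simp

lemma A_Pf: "\<pi> \<in> A \<Longrightarrow> Gm \<pi> \<in> Pf Ft"
  using redsetup.pi'_Pf[OF A_red] A_Gm Ft_eq by metis

lemma A_alpha: "\<pi> \<in> A \<Longrightarrow> \<alpha> Ft (Gm \<pi>) = \<alpha> F \<pi>"
  using redsetup.alpha_eq[OF A_red adm] A_Gm F_eq Ft_eq by metis

lemma vimage_upt: "g -` {0..<length Ft} = {0..<N}"
  by (auto simp: gm_def split: if_splits)

lemma Ei_A: assumes a: "a \<in> Pf Ft" shows "Ei a \<in> A"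
proof -
  have pa: "partition_on {0..<length Ft} a" using a by (simp add: Pf_def)
  have "partition_on (g -` {0..<length Ft}) ((-`) g ` a - {{}})" by (rule partition_on_vimage[OF pa])
  moreover have "(-`) g ` a - {{}} = Ei a"
  proof -
    have "g -` \<beta> \<noteq> {}" if ba: "\<beta> \<in> a" for \<beta>
    proof -
      have "\<beta> \<noteq> {}" using ba pa partition_onD3 by fastforce
      then obtain r where "r \<in> \<beta>" by blast
      then have "hm p r \<in> g -` \<beta>" by simp
      then show ?thesis by blast
    qed
    then show ?thesis unfolding Ei_def by auto
  qed
  ultimately have pe: "partition_on {0..<N} (Ei a)" using vimage_upt by simp
  then have pf: "Ei a \<in> Pf F" by (simp add: Pf_def)
  have "p < length Ft" by simp
  then have b0: "blk a p \<in> a" "p \<in> blk a p" using Pf_blk[OF a] by auto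
  have "g p = p" "g (Suc p) = p" by (simp_all add: gm_def)
  then have "p \<in> g -` blk a p" "Suc p \<in> g -` blk a p" using b0 by auto
  moreover have "g -` blk a p \<in> Ei a" using b0 by (simp add: Ei_def)
  ultimately have "blk (Ei a) p = g -` blk a p" using blk_eq pe partition_onD2 by metis
  then show ?thesis using pf \<open>Suc p \<in> g -` blk a p\<close> by (simp add: A_def)
qed

lemma Gm_Ei: "a \<in> Pf Ft \<Longrightarrow> Gm (Ei a) = a"
  unfolding Gm_def Ei_def image_image using surj_image_vimage_eq[OF surj_gm] by simp

lemma Ei_Gm: assumes "\<pi> \<in> A" shows "Ei (Gm \<pi>) = \<pi>"
proof -
  have "g -` (g ` \<beta>) = \<beta>" if "\<beta> \<in> \<pi>" for \<beta> using A_sat[OF assms that] by auto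
  then show ?thesis unfolding Gm_def Ei_def image_image by simp
qed

lemma E_A: "mom \<Phi> wt = (\<Sum>\<pi>\<in>A. \<alpha> F \<pi> * (\<Prod>\<beta>\<in>\<pi> - {blk \<pi> p}. K \<alpha> \<Phi> (nths w \<beta>)) *
                                K \<alpha> \<Phi> (nths wt (g ` blk \<pi> p)))"
proof -
  have "mom \<Phi> wt = (\<Sum>\<pi>'\<in>Pf Ft. \<alpha> Ft \<pi>' * (\<Prod>\<beta>\<in>\<pi>'. K \<alpha> \<Phi> (nths wt \<beta>)))"
    by (rule K_expand[OF adm]) simp
  also have "\<dots> = (\<Sum>\<pi>\<in>A. \<alpha> Ft (Gm \<pi>) * (\<Prod>\<beta>\<in>Gm \<pi>. K \<alpha> \<Phi> (nths wt \<beta>)))"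
    by (rule sum.reindex_bij_witness[where i = Gm and j = Ei]) (auto simp: Gm_Ei Ei_A Ei_Gm A_Pf[simplified])
  also have "\<dots> = (\<Sum>\<pi>\<in>A. \<alpha> F \<pi> * (\<Prod>\<beta>\<in>\<pi> - {blk \<pi> p}. K \<alpha> \<Phi> (nths w \<beta>)) *
                                K \<alpha> \<Phi> (nths wt (g ` blk \<pi> p)))"
  proof (rule sum.cong[OF refl])
    fix \<pi> assume pA: "\<pi> \<in> A"
    have fin: "finite \<pi>" using pA Pf_finite_blocks by (auto simp: A_def)
    have inj: "inj_on (\<lambda>\<beta>. g ` \<beta>) \<pi>"
    proof (rule inj_onI)
      fix b1 b2 assume "b1 \<in> \<pi>" "b2 \<in> \<pi>" "g ` b1 = g ` b2"
      then show "b1 = b2" using A_sat[OF pA] by blast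
    qed
    have "(\<Prod>\<beta>\<in>Gm \<pi>. K \<alpha> \<Phi> (nths wt \<beta>)) = (\<Prod>\<beta>\<in>\<pi>. K \<alpha> \<Phi> (nths wt (g ` \<beta>)))"
      unfolding Gm_def by (rule prod.reindex[OF inj, unfolded comp_def])
    also have "\<dots> = (\<Prod>\<beta>\<in>\<pi> - {blk \<pi> p}. K \<alpha> \<Phi> (nths wt (g ` \<beta>))) * K \<alpha> \<Phi> (nths wt (g ` blk \<pi> p))"
      using prod.remove[OF fin A_blk(1)[OF pA]] by (simp add: mult.commute)
    also have "(\<Prod>\<beta>\<in>\<pi> - {blk \<pi> p}. K \<alpha> \<Phi> (nths wt (g ` \<beta>))) = (\<Prod>\<beta>\<in>\<pi> - {blk \<pi> p}. K \<alpha> \<Phi> (nths w \<beta>))"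
    proof (rule prod.cong[OF refl])
      fix \<beta> assume b: "\<beta> \<in> \<pi> - {blk \<pi> p}"
      have dj: "disjoint \<pi>" using pA Pf_disjoint by (auto simp: A_def)
      have "p \<notin> \<beta>" "Suc p \<notin> \<beta>" using b A_blk[OF pA] blk_eq[OF dj] by (metis DiffE insertI1)+
      then show "K \<alpha> \<Phi> (nths wt (g ` \<beta>)) = K \<alpha> \<Phi> (nths w \<beta>)" using nths_g_out by metis
    qed
    finally show "\<alpha> Ft (Gm \<pi>) * (\<Prod>\<beta>\<in>Gm \<pi>. K \<alpha> \<Phi> (nths wt \<beta>)) =
        \<alpha> F \<pi> * (\<Prod>\<beta>\<in>\<pi> - {blk \<pi> p}. K \<alpha> \<Phi> (nths w \<beta>)) * K \<alpha> \<Phi> (nths wt (g ` blk \<pi> p))"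
      using A_alpha[OF pA] by (simp add: mult.assoc)
  qed
  finally show ?thesis .
qed

end

lemma adm_iv: assumes "admissible \<alpha>"
  shows "f \<noteq> [] \<Longrightarrow> \<pi> \<in> Pf f \<Longrightarrow> \<beta>1 \<in> \<pi> \<Longrightarrow> \<beta>2 \<in> \<pi> \<Longrightarrow> \<beta>1 \<noteq> \<beta>2 \<Longrightarrow>
         j \<in> \<beta>1 \<Longrightarrow> Suc j \<in> \<beta>2 \<Longrightarrow> f ! j = f ! Suc j \<Longrightarrow>
         \<alpha> f \<pi> = \<alpha> f (merge_blocks \<pi> \<beta>1 \<beta>2) * \<alpha> (nths f (\<beta>1 \<union> \<beta>2)) (relabel (\<beta>1 \<union> \<beta>2) {\<beta>1, \<beta>2})"
proof -
  have "\<forall>f \<pi> \<beta>1 \<beta>2 j. f \<noteq> [] \<and> \<pi> \<in> Pf f \<and> \<beta>1 \<in> \<pi> \<and> \<beta>2 \<in> \<pi> \<and> \<beta>1 \<noteq> \<beta>2 \<and>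
         j \<in> \<beta>1 \<and> Suc j \<in> \<beta>2 \<and> f ! j = f ! Suc j \<longrightarrow>
         \<alpha> f \<pi> = \<alpha> f (merge_blocks \<pi> \<beta>1 \<beta>2) *
                 \<alpha> (nths f (\<beta>1 \<union> \<beta>2)) (relabel (\<beta>1 \<union> \<beta>2) {\<beta>1, \<beta>2})"
    using conjunct1[OF conjunct2[OF conjunct2[OF conjunct2[OF assms[unfolded admissible_def]]]]] .
  then show "f \<noteq> [] \<Longrightarrow> \<pi> \<in> Pf f \<Longrightarrow> \<beta>1 \<in> \<pi> \<Longrightarrow> \<beta>2 \<in> \<pi> \<Longrightarrow> \<beta>1 \<noteq> \<beta>2 \<Longrightarrow>
         j \<in> \<beta>1 \<Longrightarrow> Suc j \<in> \<beta>2 \<Longrightarrow> f ! j = f ! Suc j \<Longrightarrow>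
         \<alpha> f \<pi> = \<alpha> f (merge_blocks \<pi> \<beta>1 \<beta>2) * \<alpha> (nths f (\<beta>1 \<union> \<beta>2)) (relabel (\<beta>1 \<union> \<beta>2) {\<beta>1, \<beta>2})"
    by blast
qed

lemma merge_part: assumes P: "partition_on S \<pi>" and b: "\<beta>1 \<in> \<pi>" "\<beta>2 \<in> \<pi>" "\<beta>1 \<noteq> \<beta>2"
  shows "partition_on S (merge_blocks \<pi> \<beta>1 \<beta>2)" "\<beta>1 \<union> \<beta>2 \<in> merge_blocks \<pi> \<beta>1 \<beta>2"
    "merge_blocks \<pi> \<beta>1 \<beta>2 - {\<beta>1 \<union> \<beta>2} = \<pi> - {\<beta>1, \<beta>2}" "\<beta>1 \<inter> \<beta>2 = {}"
proof -
  have U: "\<Union>\<pi> = S" and D: "\<And>c d. c \<in> \<pi> \<Longrightarrow> d \<in> \<pi> \<Longrightarrow> c \<noteq> d \<Longrightarrow> c \<inter> d = {}" and E: "{} \<notin> \<pi>"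
    using P unfolding partition_on_def pairwise_def disjnt_def by auto
  show "\<beta>1 \<inter> \<beta>2 = {}" using D b by blast
  show "partition_on S (merge_blocks \<pi> \<beta>1 \<beta>2)"
    unfolding merge_blocks_def
  proof (rule partition_onI)
    show "\<Union>(insert (\<beta>1 \<union> \<beta>2) (\<pi> - {\<beta>1, \<beta>2})) = S" using U b by blast
    show "{} \<notin> insert (\<beta>1 \<union> \<beta>2) (\<pi> - {\<beta>1, \<beta>2})" using E b by auto
    fix c d assume "c \<in> insert (\<beta>1 \<union> \<beta>2) (\<pi> - {\<beta>1, \<beta>2})" "d \<in> insert (\<beta>1 \<union> \<beta>2) (\<pi> - {\<beta>1, \<beta>2})" "c \<noteq> d"
    then show "disjnt c d" unfolding disjnt_def using D b by (auto; blast)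
  qed
  show "\<beta>1 \<union> \<beta>2 \<in> merge_blocks \<pi> \<beta>1 \<beta>2" by (simp add: merge_blocks_def)
  have "\<beta>1 \<union> \<beta>2 \<notin> \<pi> - {\<beta>1, \<beta>2}"
  proof
    assume c: "\<beta>1 \<union> \<beta>2 \<in> \<pi> - {\<beta>1, \<beta>2}"
    have "\<beta>1 \<noteq> {}" using E b by auto
    then show False using D[of "\<beta>1 \<union> \<beta>2" \<beta>1] c b by blast
  qed
  then show "merge_blocks \<pi> \<beta>1 \<beta>2 - {\<beta>1 \<union> \<beta>2} = \<pi> - {\<beta>1, \<beta>2}"
    unfolding merge_blocks_def by blast
qed

lemma split_part: assumes P: "partition_on S \<pi>" and B: "B \<in> \<pi>" and s: "\<beta>1 \<union> \<beta>2 = B" "\<beta>1 \<inter> \<beta>2 = {}"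
    "\<beta>1 \<noteq> {}" "\<beta>2 \<noteq> {}"
  shows "partition_on S (insert \<beta>1 (insert \<beta>2 (\<pi> - {B})))" "\<beta>1 \<notin> \<pi> - {B}" "\<beta>2 \<notin> \<pi> - {B}"
    "\<beta>1 \<noteq> \<beta>2" "merge_blocks (insert \<beta>1 (insert \<beta>2 (\<pi> - {B}))) \<beta>1 \<beta>2 = \<pi>"
proof -
  have U: "\<Union>\<pi> = S" and D: "\<And>c d. c \<in> \<pi> \<Longrightarrow> d \<in> \<pi> \<Longrightarrow> c \<noteq> d \<Longrightarrow> c \<inter> d = {}" and E: "{} \<notin> \<pi>"
    using P unfolding partition_on_def pairwise_def disjnt_def by auto
  show n1: "\<beta>1 \<notin> \<pi> - {B}"
  proof
    assume "\<beta>1 \<in> \<pi> - {B}"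
    then show False using D[of \<beta>1 B] B s by blast
  qed
  show n2: "\<beta>2 \<notin> \<pi> - {B}"
  proof
    assume "\<beta>2 \<in> \<pi> - {B}"
    then show False using D[of \<beta>2 B] B s by blast
  qed
  show ne: "\<beta>1 \<noteq> \<beta>2" using s by blast
  show "partition_on S (insert \<beta>1 (insert \<beta>2 (\<pi> - {B})))"
  proof (rule partition_onI)
    show "\<Union>(insert \<beta>1 (insert \<beta>2 (\<pi> - {B}))) = S" using U B s by blast
    show "{} \<notin> insert \<beta>1 (insert \<beta>2 (\<pi> - {B}))" using E s by auto
    fix c d assume "c \<in> insert \<beta>1 (insert \<beta>2 (\<pi> - {B}))" "d \<in> insert \<beta>1 (insert \<beta>2 (\<pi> - {B}))" "c \<noteq> d"
    then show "disjnt c d" unfolding disjnt_def using D B s by (auto; blast)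
  qed
  have "insert \<beta>1 (insert \<beta>2 (\<pi> - {B})) - {\<beta>1, \<beta>2} = \<pi> - {B}" using n1 n2 by blast
  then show "merge_blocks (insert \<beta>1 (insert \<beta>2 (\<pi> - {B}))) \<beta>1 \<beta>2 = \<pi>"
    unfolding merge_blocks_def using s B by auto
qed

context wsetup
begin

definition "Mrg \<pi> = (merge_blocks \<pi> (blk \<pi> p) (blk \<pi> (Suc p)), (blk \<pi> p, blk \<pi> (Suc p)))"
definition "Unm t = insert (fst (snd t)) (insert (snd (snd t)) (fst t - {fst (snd t) \<union> snd (snd t)}))"
definition "Sig = Sigma A (\<lambda>\<pi>. splits (blk \<pi> p) p)"


lemma Sig_facts: assumes t: "(\<pi>', (\<beta>1, \<beta>2)) \<in> Sig"
  shows "Unm (\<pi>', (\<beta>1, \<beta>2)) \<in> Bs" "Mrg (Unm (\<pi>', (\<beta>1, \<beta>2))) = (\<pi>', (\<beta>1, \<beta>2))"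
    "Unm (\<pi>', (\<beta>1, \<beta>2)) = insert \<beta>1 (insert \<beta>2 (\<pi>' - {blk \<pi>' p}))"
    "\<beta>1 \<notin> \<pi>' - {blk \<pi>' p}" "\<beta>2 \<notin> \<pi>' - {blk \<pi>' p}" "\<beta>1 \<noteq> \<beta>2"
    "\<alpha> F (Unm (\<pi>', (\<beta>1, \<beta>2))) = \<alpha> F \<pi>' * \<alpha> (nths F (blk \<pi>' p)) (relabel (blk \<pi>' p) {\<beta>1, \<beta>2})"
proof -
  have pA: "\<pi>' \<in> A" and sp: "(\<beta>1, \<beta>2) \<in> splits (blk \<pi>' p) p" using t by (auto simp: Sig_def)
  let ?B = "blk \<pi>' p"
  have P': "partition_on {0..<N} \<pi>'" using pA by (simp add: A_def Pf_def)
  have B: "?B \<in> \<pi>'" using A_blk[OF pA] by simp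
  have s: "\<beta>1 \<union> \<beta>2 = ?B" "\<beta>1 \<inter> \<beta>2 = {}" "p \<in> \<beta>1" "Suc p \<in> \<beta>2" using sp by (auto simp: splits_def)
  then have ne: "\<beta>1 \<noteq> {}" "\<beta>2 \<noteq> {}" by auto
  note SP = split_part[OF P' B s(1,2) ne]
  let ?\<pi> = "insert \<beta>1 (insert \<beta>2 (\<pi>' - {?B}))"
  show U: "Unm (\<pi>', (\<beta>1, \<beta>2)) = ?\<pi>" unfolding Unm_def using s by simp
  show "\<beta>1 \<notin> \<pi>' - {?B}" "\<beta>2 \<notin> \<pi>' - {?B}" "\<beta>1 \<noteq> \<beta>2" using SP by auto
  have P: "partition_on {0..<N} ?\<pi>" using SP(1) .
  have dj: "disjoint ?\<pi>" using P partition_onD2 by blast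
  have b1: "blk ?\<pi> p = \<beta>1" by (rule blk_eq[OF dj]) (use s in auto)
  have b2: "blk ?\<pi> (Suc p) = \<beta>2" by (rule blk_eq[OF dj]) (use s in auto)
  have "Suc p \<notin> \<beta>1" using s by blast
  then show "Unm (\<pi>', (\<beta>1, \<beta>2)) \<in> Bs" unfolding U Bs_def using P b1 by (simp add: Pf_def)
  show "Mrg (Unm (\<pi>', (\<beta>1, \<beta>2))) = (\<pi>', (\<beta>1, \<beta>2))" unfolding U Mrg_def b1 b2 using SP(5) by simp
  have "\<alpha> F ?\<pi> = \<alpha> F (merge_blocks ?\<pi> \<beta>1 \<beta>2) * \<alpha> (nths F (\<beta>1 \<union> \<beta>2)) (relabel (\<beta>1 \<union> \<beta>2) {\<beta>1, \<beta>2})"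
    by (rule adm_iv[OF adm, where j = p]) (use P SP s fxy in \<open>auto simp: Pf_def nth_append\<close>)
  then show "\<alpha> F (Unm (\<pi>', (\<beta>1, \<beta>2))) = \<alpha> F \<pi>' * \<alpha> (nths F ?B) (relabel ?B {\<beta>1, \<beta>2})"
    unfolding U SP(5) s(1) .
qed

lemma Bs_facts: assumes b: "\<pi> \<in> Bs"
  shows "Mrg \<pi> \<in> Sig" "Unm (Mrg \<pi>) = \<pi>"
proof -
  have pf: "\<pi> \<in> Pf F" and ns: "Suc p \<notin> blk \<pi> p" using b by (auto simp: Bs_def)
  have P: "partition_on {0..<N} \<pi>" using pf by (simp add: Pf_def)
  have k1: "blk \<pi> p \<in> \<pi>" "p \<in> blk \<pi> p" using Pf_blk[OF pf, of p] by auto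
  have k2: "blk \<pi> (Suc p) \<in> \<pi>" "Suc p \<in> blk \<pi> (Suc p)" using Pf_blk[OF pf, of "Suc p"] by auto
  let ?b1 = "blk \<pi> p" and ?b2 = "blk \<pi> (Suc p)"
  have ne: "?b1 \<noteq> ?b2" using ns k2 by auto
  note M = merge_part[OF P k1(1) k2(1) ne]
  have dj: "disjoint (merge_blocks \<pi> ?b1 ?b2)" using M(1) partition_onD2 by blast
  have bm: "blk (merge_blocks \<pi> ?b1 ?b2) p = ?b1 \<union> ?b2" by (rule blk_eq[OF dj M(2)]) (use k1 in simp)
  have "merge_blocks \<pi> ?b1 ?b2 \<in> A" unfolding A_def using M(1) bm k2 by (simp add: Pf_def)
  moreover have "(?b1, ?b2) \<in> splits (?b1 \<union> ?b2) p" using M(4) k1 k2 by (simp add: splits_def)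
  ultimately show "Mrg \<pi> \<in> Sig" unfolding Mrg_def Sig_def using bm by simp
  have "insert ?b1 (insert ?b2 (\<pi> - {?b1, ?b2})) = \<pi>" using k1 k2 by blast
  then show "Unm (Mrg \<pi>) = \<pi>" unfolding Unm_def Mrg_def using M(3) by simp
qed

lemma finite_A: "finite A" and finite_Bs: "finite Bs"
  using Pf_finite[of F] by (auto simp: A_def Bs_def intro: finite_subset)

lemma E_B: "mom \<Phi> w = (\<Sum>\<pi>\<in>A. \<alpha> F \<pi> * (\<Prod>\<beta>\<in>\<pi> - {blk \<pi> p}. K \<alpha> \<Phi> (nths w \<beta>)) *
                 (K \<alpha> \<Phi> (nths w (blk \<pi> p)) + Spl \<alpha> \<Phi> w (blk \<pi> p) p))"
proof -
  let ?P = "\<lambda>\<pi>. \<Prod>\<beta>\<in>\<pi> - {blk \<pi> p}. K \<alpha> \<Phi> (nths w \<beta>)"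
  let ?T = "\<lambda>\<pi>. \<alpha> F \<pi> * (\<Prod>\<beta>\<in>\<pi>. K \<alpha> \<Phi> (nths w \<beta>))"
  have un: "Pf F = A \<union> Bs" and dis: "A \<inter> Bs = {}" by (auto simp: A_def Bs_def)
  have "mom \<Phi> w = sum ?T (Pf F)" by (rule K_expand[OF adm]) simp
  also have "\<dots> = sum ?T A + sum ?T Bs" unfolding un by (rule sum.union_disjoint[OF finite_A finite_Bs dis])
  also have "sum ?T A = (\<Sum>\<pi>\<in>A. \<alpha> F \<pi> * ?P \<pi> * K \<alpha> \<Phi> (nths w (blk \<pi> p)))"
  proof (rule sum.cong[OF refl])
    fix \<pi> assume pA: "\<pi> \<in> A"
    have fin: "finite \<pi>" using pA Pf_finite_blocks by (auto simp: A_def)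
    show "?T \<pi> = \<alpha> F \<pi> * ?P \<pi> * K \<alpha> \<Phi> (nths w (blk \<pi> p))"
      using prod.remove[OF fin A_blk(1)[OF pA], of "\<lambda>\<beta>. K \<alpha> \<Phi> (nths w \<beta>)"] by (simp add: mult_ac)
  qed
  also have "sum ?T Bs = (\<Sum>\<pi>\<in>A. \<alpha> F \<pi> * ?P \<pi> * Spl \<alpha> \<Phi> w (blk \<pi> p) p)"
  proof -
    let ?H = "\<lambda>t. \<alpha> F (fst t) * ?P (fst t) * (\<alpha> (nths F (blk (fst t) p)) (relabel (blk (fst t) p) {fst (snd t), snd (snd t)}) *
               K \<alpha> \<Phi> (nths w (fst (snd t))) * K \<alpha> \<Phi> (nths w (snd (snd t))))"
    have "(\<Sum>\<pi>\<in>A. \<alpha> F \<pi> * ?P \<pi> * Spl \<alpha> \<Phi> w (blk \<pi> p) p) =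
          (\<Sum>\<pi>\<in>A. \<Sum>s\<in>splits (blk \<pi> p) p. ?H (\<pi>, s))"
      unfolding Spl_def by (simp add: sum_distrib_left case_prod_unfold)
    also have "\<dots> = (\<Sum>(\<pi>, s)\<in>Sig. ?H (\<pi>, s))" unfolding Sig_def
    proof (rule sum.Sigma[OF finite_A], intro ballI)
      fix \<pi> assume pA: "\<pi> \<in> A"
      then have "\<pi> \<in> Pf F" by (simp add: A_def)
      then have "finite (blk \<pi> p)" using Pf_block(3) A_blk(1)[OF pA] by blast
      then show "finite (splits (blk \<pi> p) p)" by (rule splits_finite)
    qed
    also have "\<dots> = sum ?H Sig" by (rule sum.cong) auto
    also have "\<dots> = sum ?T Bs"
    proof (rule sum.reindex_bij_witness[where i = Mrg and j = Unm])
      fix a assume a: "a \<in> Sig"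
      obtain \<pi>' \<beta>1 \<beta>2 where aa: "a = (\<pi>', (\<beta>1, \<beta>2))" by (metis prod.collapse)
      note SF = Sig_facts[OF a[unfolded aa]]
      show "Mrg (Unm a) = a" using SF aa by simp
      show "Unm a \<in> Bs" using SF aa by simp
      have pA: "\<pi>' \<in> A" using a aa by (simp add: Sig_def)
      have fin: "finite \<pi>'" using pA Pf_finite_blocks by (auto simp: A_def)
      have "(\<Prod>\<beta>\<in>Unm a. K \<alpha> \<Phi> (nths w \<beta>)) = K \<alpha> \<Phi> (nths w \<beta>1) * (K \<alpha> \<Phi> (nths w \<beta>2) * ?P \<pi>')"
        unfolding aa SF(3) using SF(4,5,6) fin by simp
      then show "?T (Unm a) = ?H a" unfolding aa using SF(7) by (simp add: mult_ac)
    next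
      fix b assume b: "b \<in> Bs"
      show "Unm (Mrg b) = b" "Mrg b \<in> Sig" using Bs_facts[OF b] by auto
    qed
    finally show ?thesis by simp
  qed
  finally show ?thesis by (simp add: sum.distrib[symmetric] distrib_left)
qed

end

lemma mprod_Cons: "l \<noteq> [] \<Longrightarrow> mprod (a # l) = a * mprod l"
  by (cases l) auto

lemma mprod_merge: "mprod (xs @ [a * b] @ ys) = mprod (xs @ [a, b] @ ys)"
proof (induction xs)
  case Nil
  then show ?case by (cases ys) (auto simp: mult.assoc)
next
  case (Cons c xs)
  then show ?case by (simp add: mprod_Cons)
qed

lemma main: assumes adm: "admissible \<alpha>"
  shows "fst x = fst y \<Longrightarrow> K \<alpha> \<Phi> (u @ [(fst x, snd x * snd y)] @ v) =
     K \<alpha> \<Phi> (u @ [x, y] @ v) + Spl \<alpha> \<Phi> (u @ [x, y] @ v) {0..<length (u @ [x, y] @ v)} (length u)"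
proof (induction "length u + length v" arbitrary: u v x y rule: less_induct)
  case less
  interpret wsetup \<alpha> \<Phi> u v x y using adm less.prems by unfold_locales
  let ?c = "\<lambda>\<pi>. \<alpha> F \<pi> * (\<Prod>\<beta>\<in>\<pi> - {blk \<pi> p}. K \<alpha> \<Phi> (nths w \<beta>))"
  let ?X = "\<lambda>\<pi>. K \<alpha> \<Phi> (nths wt (g ` blk \<pi> p))"
  let ?Y = "\<lambda>\<pi>. K \<alpha> \<Phi> (nths w (blk \<pi> p)) + Spl \<alpha> \<Phi> w (blk \<pi> p) p"
  let ?one = "{{0..<N}}"
  have mm: "mom \<Phi> wt = mom \<Phi> w" unfolding mom_def using mprod_merge[of "map snd u" "snd x" "snd y" "map snd v"]
    by simp
  have eqs: "(\<Sum>\<pi>\<in>A. ?c \<pi> * ?X \<pi>) = (\<Sum>\<pi>\<in>A. ?c \<pi> * ?Y \<pi>)"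
  proof -
    have "(\<Sum>\<pi>\<in>A. ?c \<pi> * ?X \<pi>) = mom \<Phi> wt" by (rule E_A[symmetric])
    also have "\<dots> = mom \<Phi> w" by (rule mm)
    also have "\<dots> = (\<Sum>\<pi>\<in>A. ?c \<pi> * ?Y \<pi>)" by (rule E_B)
    finally show ?thesis .
  qed
  have one_A: "?one \<in> A"
  proof -
    have "?one \<in> Pf F" using Pf_one[of F] by simp
    moreover have "blk ?one p = {0..<N}" by (rule blk_eq) auto
    ultimately show ?thesis by (simp add: A_def)
  qed
  have blk1: "blk ?one p = {0..<N}" by (rule blk_eq) auto
  have rest: "?c \<pi> * ?X \<pi> = ?c \<pi> * ?Y \<pi>" if pA: "\<pi> \<in> A - {?one}" for \<pi>
  proof -
    let ?B = "blk \<pi> p"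
    have pA': "\<pi> \<in> A" and n1: "\<pi> \<noteq> ?one" using pA by auto
    have pf: "\<pi> \<in> Pf F" using pA' by (simp add: A_def)
    have pB: "p \<in> ?B" "Suc p \<in> ?B" and Bin: "?B \<in> \<pi>" using A_blk[OF pA'] by auto
    have Bsub: "?B \<subseteq> {0..<N}" using Pf_block(1)[OF pf Bin] by simp
    have fB: "finite ?B" using Bsub finite_subset by blast
    have "\<pi> \<noteq> {{0..<length F}}" using n1 by simp
    then have "card ?B < length F" by (rule Pf_block_small[OF pf Bin])
    then have cB: "card ?B < N" by simp
    let ?u' = "nths u ?B" and ?v' = "nths v {j. j + Suc (Suc p) \<in> ?B}"
    have N1: "nths wt (g ` ?B) = ?u' @ [z] @ ?v'" by (rule nths_g_in(1)[OF pB])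
    have N2: "nths w ?B = ?u' @ [x, y] @ ?v'" by (rule nths_g_in(2)[OF pB])
    have N3: "length ?u' = rank ?B p" by (rule nths_g_in(3)[OF pB])
    note NG = N1 N2 N3
    have lw: "length (nths w ?B) = card ?B" using length_nths_sub[OF Bsub] .
    have "length ?u' + length ?v' < length u + length v" using lw cB NG(2) by simp
    then have IH: "K \<alpha> \<Phi> (?u' @ [z] @ ?v') = K \<alpha> \<Phi> (?u' @ [x, y] @ ?v') +
        Spl \<alpha> \<Phi> (?u' @ [x, y] @ ?v') {0..<length (?u' @ [x, y] @ ?v')} (length ?u')"
      by (rule less.hyps[OF _ less.prems])
    have "?X \<pi> = K \<alpha> \<Phi> (nths w ?B) + Spl \<alpha> \<Phi> (nths w ?B) {0..<card ?B} (rank ?B p)"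
      by (simp only: N1 IH N3 N2[symmetric] lw)
    also have "Spl \<alpha> \<Phi> (nths w ?B) {0..<card ?B} (rank ?B p) = Spl \<alpha> \<Phi> w ?B p"
      by (rule Spl_rank[OF Bsub pB])
    finally show ?thesis by (simp only:)
  qed
  have h1: "(\<Sum>\<pi>\<in>A. ?c \<pi> * ?X \<pi>) = ?c ?one * ?X ?one + (\<Sum>\<pi>\<in>A - {?one}. ?c \<pi> * ?X \<pi>)"
    by (rule sum.remove[OF finite_A one_A])
  have h2: "(\<Sum>\<pi>\<in>A. ?c \<pi> * ?Y \<pi>) = ?c ?one * ?Y ?one + (\<Sum>\<pi>\<in>A - {?one}. ?c \<pi> * ?Y \<pi>)"
    by (rule sum.remove[OF finite_A one_A])
  have h3: "(\<Sum>\<pi>\<in>A - {?one}. ?c \<pi> * ?X \<pi>) = (\<Sum>\<pi>\<in>A - {?one}. ?c \<pi> * ?Y \<pi>)"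
    using rest by (rule sum.cong[OF refl])
  have "?c ?one * ?X ?one + (\<Sum>\<pi>\<in>A - {?one}. ?c \<pi> * ?Y \<pi>) =
        ?c ?one * ?X ?one + (\<Sum>\<pi>\<in>A - {?one}. ?c \<pi> * ?X \<pi>)" by (simp only: h3)
  also have "\<dots> = (\<Sum>\<pi>\<in>A. ?c \<pi> * ?X \<pi>)" by (rule h1[symmetric])
  also have "\<dots> = (\<Sum>\<pi>\<in>A. ?c \<pi> * ?Y \<pi>)" by (rule eqs)
  also have "\<dots> = ?c ?one * ?Y ?one + (\<Sum>\<pi>\<in>A - {?one}. ?c \<pi> * ?Y \<pi>)" by (rule h2)
  finally have e1: "?c ?one * ?X ?one = ?c ?one * ?Y ?one" by (rule add_right_imp_eq)
  have a1: "\<alpha> F ?one = 1"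
  proof -
    have "\<forall>f. f \<noteq> [] \<longrightarrow> \<alpha> f {{0..<length f}} = 1"
      using conjunct1[OF adm[unfolded admissible_def]] .
    then have "\<alpha> F {{0..<length F}} = 1" by (metis Nil_is_append_conv list.distinct(1) map_is_Nil_conv)
    then show ?thesis by (simp only: length_map)
  qed
  have c1: "?c ?one = 1" using a1 blk1 by simp
  have gimg: "g ` {0..<N} = {0..<length wt}"
  proof -
    have "g ` {0..<N} = g ` {0..N-1}" by (intro arg_cong[where f="image g"]) auto
    also have "\<dots> = {g 0..g (N-1)}" by (rule gm_interval) simp
    also have "\<dots> = {0..<length wt}" by (auto simp: gm_def)
    finally show ?thesis .
  qed
  have X1: "?X ?one = K \<alpha> \<Phi> wt" unfolding blk1 gimg by (simp add: nths_all)
  have Y1: "?Y ?one = K \<alpha> \<Phi> w + Spl \<alpha> \<Phi> w {0..<N} p" unfolding blk1 by (simp add: nths_all)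
  show ?case using e1 c1 X1 Y1 by (simp only: mult_1_left)
qed

theorem lemma8p1:
  fixes \<alpha> :: "'q::finite list \<Rightarrow> nat set set \<Rightarrow> complex"
    and \<Phi> :: "'a::ring \<Rightarrow> complex"
    and a :: "'q \<Rightarrow> nat \<Rightarrow> 'a"
    and I :: "'q \<Rightarrow> nat set"
    and f :: "nat \<Rightarrow> 'q"
    and n i :: nat and q :: 'q
  assumes adm: "admissible \<alpha>"
    and I_sub: "\<And>Q. I Q \<subseteq> {1..n}"
    and I_disj: "disjoint_family I"
    and I_cover: "(\<Union>Q. I Q) = {1..n}"
    and f_def: "\<And>l. l \<in> {1..n} \<Longrightarrow> l \<in> I (f l)"
    and i_range: "i \<in> {1..n-1}"
    and fi: "f i = q" and fi1: "f (Suc i) = q"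
  defines "a2 \<equiv> (\<lambda>Q j. case j of Inl l \<Rightarrow> a Q l | Inr _ \<Rightarrow> a q i * a q (Suc i))"
    and "It \<equiv> (\<lambda>Q. if Q = q then Inl ` (I q - {i, Suc i}) \<union> {Inr {i, Suc i}} else Inl ` I Q)"
    and "X \<equiv> map (\<lambda>l. (f l, l)) [1..<Suc n]"
    and "Xt \<equiv> map (\<lambda>l. (f l, Inl l)) [1..<i] @ [(q, Inr {i, Suc i})] @
              map (\<lambda>l. (f l, Inl l)) [Suc (Suc i)..<Suc n]"
  shows "moment \<Phi> a2 Xt = moment \<Phi> a X \<and>
         cumulant \<alpha> \<Phi> a2 It Xt =
           cumulant \<alpha> \<Phi> a I X +
           (\<Sum>(\<beta>1, \<beta>2) \<in> {(\<beta>1, \<beta>2). {\<beta>1, \<beta>2} \<in> Pf (map fst X) \<and> \<beta>1 \<noteq> \<beta>2 \<and>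
                               i - 1 \<in> \<beta>1 \<and> i \<in> \<beta>2}.
              \<alpha> (map fst X) {\<beta>1, \<beta>2} * cumulant \<alpha> \<Phi> a I (nths X \<beta>1) *
                cumulant \<alpha> \<Phi> a I (nths X \<beta>2))"
proof -
  note a2_def = assms(9) and It_def = assms(10) and X_def = assms(11) and Xt_def = assms(12)
  have i1: "1 \<le> i" and i2: "Suc i \<le> n" using i_range by auto
  define u where "u = map (\<lambda>l. (f l, a (f l) l)) [1..<i]"
  define v where "v = map (\<lambda>l. (f l, a (f l) l)) [Suc (Suc i)..<Suc n]"
  define x where "x = (q, a q i)"
  define y where "y = (q, a q (Suc i))"
  have fxy: "fst x = fst y" by (simp add: x_def y_def)
  have split: "[1..<Suc n] = [1..<i] @ [i, Suc i] @ [Suc (Suc i)..<Suc n]"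
  proof -
    have "[1..<Suc n] = [1..<i + (Suc n - i)]" using i2 by simp
    also have "\<dots> = [1..<i] @ [i..<i + (Suc n - i)]" using i1 by (rule upt_add_eq_append)
    finally have "[1..<Suc n] = [1..<i] @ [i..<Suc n]" using i2 by simp
    moreover have "[i..<Suc n] = i # [Suc i..<Suc n]" using i2 by (simp add: upt_conv_Cons)
    moreover have "[Suc i..<Suc n] = Suc i # [Suc (Suc i)..<Suc n]" using i2 by (simp add: upt_conv_Cons)
    ultimately show ?thesis by simp
  qed
  have evX: "ev a X = u @ [x, y] @ v"
    unfolding X_def ev_def u_def v_def x_def y_def split using fi fi1 by simp
  have evXt: "ev a2 Xt = u @ [(fst x, snd x * snd y)] @ v"
    unfolding Xt_def ev_def u_def v_def x_def y_def a2_def by simp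
  have lu: "length u = i - 1" by (simp add: u_def)
  let ?w = "u @ [x, y] @ v"
  have lX: "length X = n" by (simp add: X_def)
  have lw: "length ?w = n" using evX lX by (metis ev_length)
  have monX: "is_monomial I X"
    unfolding is_monomial_def X_def using i2 f_def by auto
  have monXt: "is_monomial It Xt"
  proof -
    have "Inl l \<in> It (f l)" if "l \<in> {1..<i} \<union> {Suc (Suc i)..<Suc n}" for l
    proof -
      have "l \<in> I (f l)" "l \<noteq> i" "l \<noteq> Suc i" using that f_def i2 by auto
      then show ?thesis unfolding It_def by auto
    qed
    moreover have "Inr {i, Suc i} \<in> It q" unfolding It_def by simp
    ultimately show ?thesis unfolding is_monomial_def Xt_def by auto
  qed
  have mom: "moment \<Phi> a2 Xt = moment \<Phi> a X"
    unfolding moment_ev evX evXt mom_def using mprod_merge[of "map snd u" "snd x" "snd y" "map snd v"] by simp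
  have cXt: "cumulant \<alpha> \<Phi> a2 It Xt = K \<alpha> \<Phi> ?w + Spl \<alpha> \<Phi> ?w {0..<length ?w} (length u)"
    unfolding cumulant_K[OF adm monXt] evXt by (rule main[OF adm fxy])
  have cX: "cumulant \<alpha> \<Phi> a I X = K \<alpha> \<Phi> ?w"
    unfolding cumulant_K[OF adm monX] evX ..
  have FX: "map fst X = map fst ?w" using ev_fst[of a X] evX by simp
  have S: "{(\<beta>1, \<beta>2). {\<beta>1, \<beta>2} \<in> Pf (map fst X) \<and> \<beta>1 \<noteq> \<beta>2 \<and> i - 1 \<in> \<beta>1 \<and> i \<in> \<beta>2}
      = splits {0..<length ?w} (length u)"
  proof -
    have "({\<beta>1, \<beta>2} \<in> Pf (map fst X) \<and> \<beta>1 \<noteq> \<beta>2 \<and> i - 1 \<in> \<beta>1 \<and> i \<in> \<beta>2) \<longleftrightarrow>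
          (\<beta>1 \<union> \<beta>2 = {0..<length ?w} \<and> \<beta>1 \<inter> \<beta>2 = {} \<and> length u \<in> \<beta>1 \<and> Suc (length u) \<in> \<beta>2)" for \<beta>1 \<beta>2
    proof -
      have si: "Suc (i - 1) = i" using i1 by simp
      have "{\<beta>1, \<beta>2} \<in> Pf (map fst X) \<longleftrightarrow> partition_on {0..<length ?w} {\<beta>1, \<beta>2}"
        using lw by (simp add: Pf_def lX)
      moreover have "partition_on S {\<beta>1, \<beta>2} \<and> \<beta>1 \<noteq> \<beta>2 \<and> r \<in> \<beta>1 \<and> t \<in> \<beta>2 \<longleftrightarrow>
          \<beta>1 \<union> \<beta>2 = S \<and> \<beta>1 \<inter> \<beta>2 = {} \<and> r \<in> \<beta>1 \<and> t \<in> \<beta>2" for S r t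
        unfolding partition_on_def pairwise_def disjnt_def by auto
      ultimately show ?thesis using lu si by metis
    qed
    then show ?thesis unfolding splits_def by auto
  qed
  have sumeq: "(\<Sum>(\<beta>1, \<beta>2) \<in> splits {0..<length ?w} (length u).
              \<alpha> (map fst X) {\<beta>1, \<beta>2} * cumulant \<alpha> \<Phi> a I (nths X \<beta>1) *
                cumulant \<alpha> \<Phi> a I (nths X \<beta>2)) = Spl \<alpha> \<Phi> ?w {0..<length ?w} (length u)"
    unfolding Spl_def
  proof (rule sum.cong[OF refl], clarify)
    fix \<beta>1 \<beta>2 assume sp: "(\<beta>1, \<beta>2) \<in> splits {0..<length ?w} (length u)"
    then have sub: "\<beta>1 \<subseteq> {0..<length ?w}" "\<beta>2 \<subseteq> {0..<length ?w}" by (auto simp: splits_def)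
    have "{\<beta>1, \<beta>2} \<in> Pf (map fst X)" using sp S by auto
    then have m: "is_monomial I (nths X \<beta>1)" "is_monomial I (nths X \<beta>2)"
      using monomial_nths[OF monX] by auto
    have c: "cumulant \<alpha> \<Phi> a I (nths X \<beta>) = K \<alpha> \<Phi> (nths ?w \<beta>)" if "is_monomial I (nths X \<beta>)" for \<beta>
      unfolding cumulant_K[OF adm that] ev_nths evX ..
    have "nths (map fst ?w) {0..<length ?w} = map fst ?w" by (rule nths_all) simp
    then show "\<alpha> (map fst X) {\<beta>1, \<beta>2} * cumulant \<alpha> \<Phi> a I (nths X \<beta>1) * cumulant \<alpha> \<Phi> a I (nths X \<beta>2) =
          \<alpha> (nths (map fst ?w) {0..<length ?w}) (relabel {0..<length ?w} {\<beta>1, \<beta>2}) *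
          K \<alpha> \<Phi> (nths ?w \<beta>1) * K \<alpha> \<Phi> (nths ?w \<beta>2)"
      using c[OF m(1)] c[OF m(2)] relabel_upt[OF sub] FX by simp
  qed
  show ?thesis using mom cXt cX S sumeq by simp
qed

end
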